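(* There exists a family $\mathcal F_1$ of $5$ axis-parallel rectangles such that $\pi_L(\mathcal F_1)\ge \frac{6}{5}\,\pi(\mathcal F_1)$.
   Context: For a finite family $\mathcal F$ of closed axis-parallel rectangles in the plane, a point set $P\subset\mathbb R^2$ is $\mathcal F$-piercing if every translate of every rectangle in $\mathcal F$ contains a point of $P$. The density of a point set $P$ is $\limsup_{r\to\infty} |P\cap[-r,r]^2|/(2r)^2$. $\pi(\mathcal F)$ is the infimum of the densities of $\mathcal F$-piercing point sets, and $\pi_L(\mathcal F)$ is the infimum of the densities of $\mathcal F$-piercing lattices, where a lattice $\{iu+jv:i,j\in\mathbb Z\}$ ($u,v$ linearly independent) has density $1/|\det[u,v]|$. *)

theory Defs
  imports Complex_Main "HOL-Library.Extended_Real" "HOL-Library.Liminf_Limsup"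
begin

text \<open>A closed axis-parallel rectangle is represented by its side lengths (a,b), a,b > 0;
  its translate by (x,y) is the closed box [x,x+a] x [y,y+b].\<close>

definition is_rect :: "real \<times> real \<Rightarrow> bool" where
  "is_rect R \<longleftrightarrow> fst R > 0 \<and> snd R > 0"

definition translate_rect :: "real \<times> real \<Rightarrow> real \<times> real \<Rightarrow> (real \<times> real) set" where
  "translate_rect R t = {fst t .. fst t + fst R} \<times> {snd t .. snd t + snd R}"

definition piercing :: "(real \<times> real) set \<Rightarrow> (real \<times> real) set \<Rightarrow> bool" where
  "piercing F P \<longleftrightarrow> (\<forall>R\<in>F. \<forall>t. \<exists>p\<in>P. p \<in> translate_rect R t)"

definition ecount :: "'a set \<Rightarrow> ereal" where
  "ecount A = (if finite A then ereal (real (card A)) else \<infinity>)"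

definition density :: "(real \<times> real) set \<Rightarrow> ereal" where
  "density P = Limsup at_top
     (\<lambda>r::real. ecount (P \<inter> ({-r..r} \<times> {-r..r})) * ereal (1 / (2 * r)^2))"

definition lattice :: "real \<times> real \<Rightarrow> real \<times> real \<Rightarrow> (real \<times> real) set" where
  "lattice u v = {(of_int i * fst u + of_int j * fst v, of_int i * snd u + of_int j * snd v)
                   | i j :: int. True}"

definition det2 :: "real \<times> real \<Rightarrow> real \<times> real \<Rightarrow> real" where
  "det2 u v = fst u * snd v - snd u * fst v"

definition pi_dens :: "(real \<times> real) set \<Rightarrow> ereal" where
  "pi_dens F = Inf {density P | P. piercing F P}"

definition pi_L :: "(real \<times> real) set \<Rightarrow> ereal" where
  "pi_L F = Inf {ereal (1 / \<bar>det2 u v\<bar>) | u v. det2 u v \<noteq> 0 \<and> piercing F (lattice u v)}"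

end

theory Submission
  imports Defs
begin

lemma lat_mem: "z \<in> lattice u v \<longleftrightarrow> (\<exists>i j::int. z = (of_int i * fst u + of_int j * fst v, of_int i * snd u + of_int j * snd v))"
  unfolding lattice_def by auto

definition padd :: "real \<times> real \<Rightarrow> real \<times> real \<Rightarrow> real \<times> real" where
  "padd p q = (fst p + fst q, snd p + snd q)"
definition psub :: "real \<times> real \<Rightarrow> real \<times> real \<Rightarrow> real \<times> real" where
  "psub p q = (fst p - fst q, snd p - snd q)"
definition pneg :: "real \<times> real \<Rightarrow> real \<times> real" where
  "pneg p = (- fst p, - snd p)"

lemma lat_add: assumes "p \<in> lattice u v" "q \<in> lattice u v" shows "padd p q \<in> lattice u v"
proof -
  obtain i j :: int where p: "p = (of_int i * fst u + of_int j * fst v, of_int i * snd u + of_int j * snd v)"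
    using assms(1) lat_mem by blast
  obtain i' j' :: int where q: "q = (of_int i' * fst u + of_int j' * fst v, of_int i' * snd u + of_int j' * snd v)"
    using assms(2) lat_mem by blast
  show ?thesis unfolding lat_mem padd_def p q
    by (rule exI[of _ "i+i'"], rule exI[of _ "j+j'"]) (simp add: algebra_simps)
qed

lemma lat_neg: assumes "p \<in> lattice u v" shows "pneg p \<in> lattice u v"
proof -
  obtain i j :: int where p: "p = (of_int i * fst u + of_int j * fst v, of_int i * snd u + of_int j * snd v)"
    using assms(1) lat_mem by blast
  show ?thesis unfolding lat_mem pneg_def p
    by (rule exI[of _ "-i"], rule exI[of _ "-j"]) (simp add: algebra_simps)
qed

lemma lat_sub: assumes "p \<in> lattice u v" "q \<in> lattice u v" shows "psub p q \<in> lattice u v"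
proof -
  have "psub p q = padd p (pneg q)" by (simp add: psub_def padd_def pneg_def)
  then show ?thesis using lat_add lat_neg assms by metis
qed

lemma lat_det: assumes "p \<in> lattice u v" "q \<in> lattice u v"
  shows "\<exists>k::int. det2 p q = of_int k * det2 u v"
proof -
  obtain i j :: int where p: "p = (of_int i * fst u + of_int j * fst v, of_int i * snd u + of_int j * snd v)"
    using assms(1) lat_mem by blast
  obtain i' j' :: int where q: "q = (of_int i' * fst u + of_int j' * fst v, of_int i' * snd u + of_int j' * snd v)"
    using assms(2) lat_mem by blast
  show ?thesis unfolding p q det2_def
    by (rule exI[of _ "i*j' - j*i'"]) (simp add: algebra_simps)
qed

lemma cramer:
  fixes l r z :: "real \<times> real"
  shows "det2 l r * fst z = det2 z r * fst l + det2 l z * fst r"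
    and "det2 l r * snd z = det2 z r * snd l + det2 l z * snd r"
  unfolding det2_def by algebra+

lemma lat_basis:
  assumes D: "det2 u v \<noteq> 0" and l: "l \<in> lattice u v" and r: "r \<in> lattice u v"
    and dlr: "\<bar>det2 l r\<bar> = \<bar>det2 u v\<bar>" and z: "z \<in> lattice u v"
  shows "\<exists>i j::int. fst z = of_int i * fst l + of_int j * fst r \<and> snd z = of_int i * snd l + of_int j * snd r"
proof -
  define D where "D = det2 u v"
  obtain k1 :: int where k1: "det2 z r = of_int k1 * D" using lat_det[OF z r] D_def by blast
  obtain k2 :: int where k2: "det2 l z = of_int k2 * D" using lat_det[OF l z] D_def by blast
  obtain s :: int where s: "det2 l r = of_int s * D" and ss: "s * s = 1"
  proof (cases "det2 l r = D")
    case True then show ?thesis using that[of 1] by simp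
  next
    case False then have "det2 l r = - D" using dlr D_def by (auto simp: abs_if split: if_splits)
    then show ?thesis using that[of "-1"] by simp
  qed
  have Dn: "D \<noteq> 0" using D D_def by simp
  have sr: "of_int s * of_int s = (1::real)" using ss by (metis of_int_1 of_int_mult)
  have e1: "of_int s * D * fst z = of_int k1 * D * fst l + of_int k2 * D * fst r"
    using cramer(1)[of l r z] k1 k2 s by simp
  have e2: "of_int s * D * snd z = of_int k1 * D * snd l + of_int k2 * D * snd r"
    using cramer(2)[of l r z] k1 k2 s by simp
  have f1: "of_int s * fst z = of_int k1 * fst l + of_int k2 * fst r"
  proof -
    have "D * (of_int s * fst z) = D * (of_int k1 * fst l + of_int k2 * fst r)"
      using e1 by (simp add: algebra_simps)
    then show ?thesis using Dn by simp
  qed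
  have f2: "of_int s * snd z = of_int k1 * snd l + of_int k2 * snd r"
  proof -
    have "D * (of_int s * snd z) = D * (of_int k1 * snd l + of_int k2 * snd r)"
      using e2 by (simp add: algebra_simps)
    then show ?thesis using Dn by simp
  qed
  have g1: "fst z = of_int (s*k1) * fst l + of_int (s*k2) * fst r"
  proof -
    have "fst z = of_int s * (of_int s * fst z)" using sr by (simp add: mult.assoc[symmetric])
    also have "\<dots> = of_int (s*k1) * fst l + of_int (s*k2) * fst r" using f1 by (simp add: algebra_simps)
    finally show ?thesis .
  qed
  have g2: "snd z = of_int (s*k1) * snd l + of_int (s*k2) * snd r"
  proof -
    have "snd z = of_int s * (of_int s * snd z)" using sr by (simp add: mult.assoc[symmetric])
    also have "\<dots> = of_int (s*k1) * snd l + of_int (s*k2) * snd r" using f2 by (simp add: algebra_simps)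
    finally show ?thesis .
  qed
  show ?thesis using g1 g2 by blast
qed

lemma int_ge1_or_le0: fixes i :: int shows "i \<ge> 1 \<or> i \<le> 0" by linarith

lemma fail_lemma:
  assumes D: "det2 u v \<noteq> 0" and l: "l \<in> lattice u v" and r: "r \<in> lattice u v"
    and dlr: "\<bar>det2 l r\<bar> = \<bar>det2 u v\<bar>"
    and lx: "fst l \<le> 0" and rx: "0 \<le> fst r" and ly: "0 \<le> snd l" and ry: "0 \<le> snd r"
    and W: "fst r - fst l > a" and H: "snd l + snd r > b"
  shows "\<exists>t. \<forall>p\<in>lattice u v. p \<notin> translate_rect (a,b) t"
proof -
  define e where "e = min (fst r - fst l - a) (snd l + snd r - b) / 2"
  define m where "m = min (fst r - fst l - a) (snd l + snd r - b)"
  have m1: "m \<le> fst r - fst l - a" "m \<le> snd l + snd r - b" unfolding m_def by simp_all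
  have m2: "m > 0" unfolding m_def using W H by simp
  have em: "e = m / 2" unfolding e_def m_def by simp
  have e0: "e > 0" using m2 em by simp
  have e1: "fst l + e + a < fst r" using m1 m2 em by linarith
  have e2: "e + b < snd l + snd r" using m1 m2 em by linarith
  show ?thesis
  proof (rule exI[of _ "(fst l + e, e)"], intro ballI)
    fix p assume p: "p \<in> lattice u v"
    obtain i j :: int where pi: "fst p = of_int i * fst l + of_int j * fst r"
      and pj: "snd p = of_int i * snd l + of_int j * snd r"
      using lat_basis[OF D l r dlr p] by blast
    show "p \<notin> translate_rect (a, b) (fst l + e, e)"
    proof
      assume inr: "p \<in> translate_rect (a, b) (fst l + e, e)"
      then have x1: "fst l + e \<le> fst p" and x2: "fst p \<le> fst l + e + a"
        and y1: "e \<le> snd p" and y2: "snd p \<le> e + b"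
        unfolding translate_rect_def by (auto simp: mem_Times_iff)
      consider "i \<ge> 1" "j \<ge> 1" | "i \<ge> 1" "j \<le> 0" | "i \<le> 0" "j \<ge> 1" | "i \<le> 0" "j \<le> 0"
        using int_ge1_or_le0[of i] int_ge1_or_le0[of j] by blast
      then show False
      proof cases
        case 1
        have "of_int i * snd l \<ge> 1 * snd l" using 1 ly by (intro mult_right_mono) simp_all
        moreover have "of_int j * snd r \<ge> 1 * snd r" using 1 ry by (intro mult_right_mono) simp_all
        ultimately show False using pj y2 e2 by linarith
      next
        case 2
        have "of_int i * fst l \<le> 1 * fst l" using 2 lx by (intro mult_right_mono_neg) simp_all
        moreover have "of_int j * fst r \<le> 0" using 2 rx by (simp add: mult_nonpos_nonneg)
        ultimately show False using pi x1 e0 by linarith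
      next
        case 3
        have "of_int i * fst l \<ge> 0" using 3 lx by (simp add: mult_nonpos_nonpos)
        moreover have "of_int j * fst r \<ge> 1 * fst r" using 3 rx by (intro mult_right_mono) simp_all
        ultimately show False using pi x2 e1 by linarith
      next
        case 4
        have "of_int i * snd l \<le> 0" using 4 ly by (simp add: mult_nonpos_nonneg)
        moreover have "of_int j * snd r \<le> 0" using 4 ry by (simp add: mult_nonpos_nonneg)
        ultimately show False using pj y1 e0 by linarith
      qed
    qed
  qed
qed

definition U :: "real \<Rightarrow> real \<Rightarrow> bool" where
 "U W H \<longleftrightarrow> (W \<le> 1 \<or> H \<le> 6) \<and> (W \<le> 2 \<or> H \<le> 4) \<and> (W \<le> 3 \<or> H \<le> 3) \<and> (W \<le> 4 \<or> H \<le> 2) \<and> (W \<le> 6 \<or> H \<le> 1)"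
definition par :: "real \<times> real \<times> real \<times> real \<Rightarrow> real \<times> real \<times> real \<times> real" where
 "par t = (case t of (a,b,g,d) \<Rightarrow> if d \<le> b then (a+g, b-d, g, d) else (a, b, g+a, d-b))"
definition UT :: "real \<times> real \<times> real \<times> real \<Rightarrow> bool" where
 "UT t = (case t of (a,b,g,d) \<Rightarrow> U (a+g) (b+d))"
lemma chain_real:
  fixes a b g d :: real
  assumes b1: "0 \<le> a" and b2: "a \<le> 1" and b3: "0 \<le> g" and b4: "g \<le> 1" and b5: "0 \<le> b" and b6: "0 \<le> d" and b7: "1 < a + g"
  and u0: "UT (a,b,g,d)"
  and u1: "UT (par (a,b,g,d))"
  and u2: "UT (par (par (a,b,g,d)))"
  and u3: "UT (par (par (par (a,b,g,d))))"
  and u4: "UT (par (par (par (par (a,b,g,d)))))"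
  shows "a*d + b*g \<le> 5"
proof -
  show ?thesis
  proof (cases "d \<le> b")
    case True
    note k1 = True
    have q2: "par (a, b, g, d) = ((a + g), (b - d), g, d)" using k1 by (simp add: par_def)
    have v3: "UT ((a + g), (b - d), g, d)" using u1  q2 by simp
    show ?thesis
    proof (cases "d \<le> (b - d)")
      case True
      note k4 = True
      have q5: "par ((a + g), (b - d), g, d) = (((a + g) + g), ((b - d) - d), g, d)" using k4 by (simp add: par_def)
      have v6: "UT (((a + g) + g), ((b - d) - d), g, d)" using u2 q2 q5 by simp
      show ?thesis
      proof (cases "d \<le> ((b - d) - d)")
        case True
        note k7 = True
        have q8: "par (((a + g) + g), ((b - d) - d), g, d) = ((((a + g) + g) + g), (((b - d) - d) - d), g, d)" using k7 by (simp add: par_def)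
        have v9: "UT ((((a + g) + g) + g), (((b - d) - d) - d), g, d)" using u3 q2 q5 q8 by simp
        show ?thesis
        proof (cases "d \<le> (((b - d) - d) - d)")
          case True
          note k10 = True
          have q11: "par ((((a + g) + g) + g), (((b - d) - d) - d), g, d) = (((((a + g) + g) + g) + g), ((((b - d) - d) - d) - d), g, d)" using k10 by (simp add: par_def)
          have v12: "UT (((((a + g) + g) + g) + g), ((((b - d) - d) - d) - d), g, d)" using u4 q2 q5 q8 q11 by simp
          have h13: "a + g \<le> 1 \<or> b + d \<le> 6" using u0 by (simp add: UT_def U_def)
          have c14: "b + d \<le> 6"
          proof (rule disjE[OF h13])
            assume "a + g \<le> 1" then show ?thesis using b1 b2 b3 b4 b5 b6 b7 k1 k4 k7 k10 by linarith
          next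
            assume "b + d \<le> 6" then show ?thesis .
          qed
          have h15: "(a + g) + g \<le> 2 \<or> (b - d) + d \<le> 4" using v3 by (simp add: UT_def U_def)
          show ?thesis
          proof (rule disjE[OF h15])
            assume c16: "(a + g) + g \<le> 2"
            have h17: "((a + g) + g) + g \<le> 2 \<or> ((b - d) - d) + d \<le> 4" using v6 by (simp add: UT_def U_def)
            show ?thesis
            proof (rule disjE[OF h17])
              assume c18: "((a + g) + g) + g \<le> 2"
              have p19: "0 \<le> ((0) + (1)*a) * ((0) + (1)*b + (-4)*d)" by (rule mult_nonneg_nonneg) (use b1 b2 b3 b4 b5 b6 b7 k1 k4 k7 k10 c14 c16 c18 in linarith)+
              have p20: "0 \<le> ((0) + (1)*a) * ((6) + (-1)*b + (-1)*d)" by (rule mult_nonneg_nonneg) (use b1 b2 b3 b4 b5 b6 b7 k1 k4 k7 k10 c14 c16 c18 in linarith)+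
              have p21: "0 \<le> ((0) + (1)*g) * ((0) + (1)*d)" by (rule mult_nonneg_nonneg) (use b1 b2 b3 b4 b5 b6 b7 k1 k4 k7 k10 c14 c16 c18 in linarith)+
              have p22: "0 \<le> ((0) + (1)*g) * ((6) + (-1)*b + (-1)*d)" by (rule mult_nonneg_nonneg) (use b1 b2 b3 b4 b5 b6 b7 k1 k4 k7 k10 c14 c16 c18 in linarith)+
              have e23: "5 - (a*d + b*g) = (13/5)*((1) + (-1)*g) + (1/5)*((2) + (-1)*a + (-2)*g) + (1)*((2) + (-1)*a + (-3)*g) + (1/5)*(((0) + (1)*a) * ((0) + (1)*b + (-4)*d)) + (1/5)*(((0) + (1)*a) * ((6) + (-1)*b + (-1)*d)) + (1)*(((0) + (1)*g) * ((0) + (1)*d)) + (1)*(((0) + (1)*g) * ((6) + (-1)*b + (-1)*d))" by algebra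
              show ?thesis using b1 b2 b3 b4 b5 b6 b7 k1 k4 k7 k10 c14 c16 c18 p19 p20 p21 p22 e23 by argo
            next
              assume c24: "((b - d) - d) + d \<le> 4"
              have p25: "0 \<le> ((0) + (1)*a) * ((0) + (1)*b + (-4)*d)" by (rule mult_nonneg_nonneg) (use b1 b2 b3 b4 b5 b6 b7 k1 k4 k7 k10 c14 c16 c24 in linarith)+
              have p26: "0 \<le> ((0) + (1)*a) * ((6) + (-1)*b + (-1)*d)" by (rule mult_nonneg_nonneg) (use b1 b2 b3 b4 b5 b6 b7 k1 k4 k7 k10 c14 c16 c24 in linarith)+
              have p27: "0 \<le> ((0) + (1)*g) * ((6) + (-1)*b + (-1)*d)" by (rule mult_nonneg_nonneg) (use b1 b2 b3 b4 b5 b6 b7 k1 k4 k7 k10 c14 c16 c24 in linarith)+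
              have p28: "0 \<le> ((0) + (1)*g) * ((4) + (-1)*b + (1)*d)" by (rule mult_nonneg_nonneg) (use b1 b2 b3 b4 b5 b6 b7 k1 k4 k7 k10 c14 c16 c24 in linarith)+
              have e29: "5 - (a*d + b*g) = (13/5)*((1) + (-1)*g) + (6/5)*((2) + (-1)*a + (-2)*g) + (1/5)*(((0) + (1)*a) * ((0) + (1)*b + (-4)*d)) + (1/5)*(((0) + (1)*a) * ((6) + (-1)*b + (-1)*d)) + (1/2)*(((0) + (1)*g) * ((6) + (-1)*b + (-1)*d)) + (1/2)*(((0) + (1)*g) * ((4) + (-1)*b + (1)*d))" by algebra
              show ?thesis using b1 b2 b3 b4 b5 b6 b7 k1 k4 k7 k10 c14 c16 c24 p25 p26 p27 p28 e29 by argo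
            qed
          next
            assume c30: "(b - d) + d \<le> 4"
            have p31: "0 \<le> ((0) + (1)*a) * ((0) + (1)*b + (-4)*d)" by (rule mult_nonneg_nonneg) (use b1 b2 b3 b4 b5 b6 b7 k1 k4 k7 k10 c14 c30 in linarith)+
            have p32: "0 \<le> ((0) + (1)*a) * ((4) + (-1)*b)" by (rule mult_nonneg_nonneg) (use b1 b2 b3 b4 b5 b6 b7 k1 k4 k7 k10 c14 c30 in linarith)+
            have p33: "0 \<le> ((0) + (1)*g) * ((4) + (-1)*b)" by (rule mult_nonneg_nonneg) (use b1 b2 b3 b4 b5 b6 b7 k1 k4 k7 k10 c14 c30 in linarith)+
            have e34: "5 - (a*d + b*g) = (1)*((1) + (-1)*a) + (4)*((1) + (-1)*g) + (1/4)*(((0) + (1)*a) * ((0) + (1)*b + (-4)*d)) + (1/4)*(((0) + (1)*a) * ((4) + (-1)*b)) + (1)*(((0) + (1)*g) * ((4) + (-1)*b))" by algebra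
            show ?thesis using b1 b2 b3 b4 b5 b6 b7 k1 k4 k7 k10 c14 c30 p31 p32 p33 e34 by argo
          qed
        next
          case False
          note k35 = False
          have q36: "par ((((a + g) + g) + g), (((b - d) - d) - d), g, d) = (((((a + g) + g) + g)), ((((b - d) - d) - d)), (g + (((a + g) + g) + g)), (d - (((b - d) - d) - d)))" using k35 by (simp add: par_def)
          have v37: "UT (((((a + g) + g) + g)), ((((b - d) - d) - d)), (g + (((a + g) + g) + g)), (d - (((b - d) - d) - d)))" using u4 q2 q5 q8 q36 by simp
          have h38: "a + g \<le> 1 \<or> b + d \<le> 6" using u0 by (simp add: UT_def U_def)
          have c39: "b + d \<le> 6"
          proof (rule disjE[OF h38])
            assume "a + g \<le> 1" then show ?thesis using b1 b2 b3 b4 b5 b6 b7 k1 k4 k7 k35 by linarith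
          next
            assume "b + d \<le> 6" then show ?thesis .
          qed
          have h40: "(a + g) + g \<le> 2 \<or> (b - d) + d \<le> 4" using v3 by (simp add: UT_def U_def)
          show ?thesis
          proof (rule disjE[OF h40])
            assume c41: "(a + g) + g \<le> 2"
            have p42: "0 \<le> ((0) + (1)*a) * ((0) + (1)*b + (-3)*d)" by (rule mult_nonneg_nonneg) (use b1 b2 b3 b4 b5 b6 b7 k1 k4 k7 k35 c39 c41 in linarith)+
            have p43: "0 \<le> ((0) + (1)*a) * ((6) + (-1)*b + (-1)*d)" by (rule mult_nonneg_nonneg) (use b1 b2 b3 b4 b5 b6 b7 k1 k4 k7 k35 c39 c41 in linarith)+
            have p44: "0 \<le> ((0) + (1)*g) * ((0) + (1)*d)" by (rule mult_nonneg_nonneg) (use b1 b2 b3 b4 b5 b6 b7 k1 k4 k7 k35 c39 c41 in linarith)+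
            have p45: "0 \<le> ((0) + (1)*g) * ((6) + (-1)*b + (-1)*d)" by (rule mult_nonneg_nonneg) (use b1 b2 b3 b4 b5 b6 b7 k1 k4 k7 k35 c39 c41 in linarith)+
            have p46: "0 \<le> ((0) + (1)*g) * ((0) + (-1)*b + (4)*d)" by (rule mult_nonneg_nonneg) (use b1 b2 b3 b4 b5 b6 b7 k1 k4 k7 k35 c39 c41 in linarith)+
            have e47: "5 - (a*d + b*g) = (2)*((1) + (-1)*g) + (3/2)*((2) + (-1)*a + (-2)*g) + (1/4)*(((0) + (1)*a) * ((0) + (1)*b + (-3)*d)) + (1/4)*(((0) + (1)*a) * ((6) + (-1)*b + (-1)*d)) + (1/6)*(((0) + (1)*g) * ((0) + (1)*d)) + (5/6)*(((0) + (1)*g) * ((6) + (-1)*b + (-1)*d)) + (1/6)*(((0) + (1)*g) * ((0) + (-1)*b + (4)*d))" by algebra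
            show ?thesis using b1 b2 b3 b4 b5 b6 b7 k1 k4 k7 k35 c39 c41 p42 p43 p44 p45 p46 e47 by argo
          next
            assume c48: "(b - d) + d \<le> 4"
            have h49: "((((a + g) + g) + g)) + (g + (((a + g) + g) + g)) \<le> 6 \<or> ((((b - d) - d) - d)) + (d - (((b - d) - d) - d)) \<le> 1" using v37 by (simp add: UT_def U_def)
            show ?thesis
            proof (rule disjE[OF h49])
              assume c50: "((((a + g) + g) + g)) + (g + (((a + g) + g) + g)) \<le> 6"
              have p51: "0 \<le> ((0) + (1)*a) * ((0) + (1)*b + (-3)*d)" by (rule mult_nonneg_nonneg) (use b1 b2 b3 b4 b5 b6 b7 k1 k4 k7 k35 c39 c48 c50 in linarith)+
              have p52: "0 \<le> ((0) + (1)*a) * ((4) + (-1)*b)" by (rule mult_nonneg_nonneg) (use b1 b2 b3 b4 b5 b6 b7 k1 k4 k7 k35 c39 c48 c50 in linarith)+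
              have p53: "0 \<le> ((0) + (1)*g) * ((0) + (1)*d)" by (rule mult_nonneg_nonneg) (use b1 b2 b3 b4 b5 b6 b7 k1 k4 k7 k35 c39 c48 c50 in linarith)+
              have p54: "0 \<le> ((0) + (1)*g) * ((6) + (-1)*b + (-1)*d)" by (rule mult_nonneg_nonneg) (use b1 b2 b3 b4 b5 b6 b7 k1 k4 k7 k35 c39 c48 c50 in linarith)+
              have p55: "0 \<le> ((0) + (1)*g) * ((4) + (-1)*b)" by (rule mult_nonneg_nonneg) (use b1 b2 b3 b4 b5 b6 b7 k1 k4 k7 k35 c39 c48 c50 in linarith)+
              have e56: "5 - (a*d + b*g) = (11/12)*((6) + (-2)*a + (-7)*g) + (1/2)*((-1) + (1)*a + (1)*g) + (1/3)*(((0) + (1)*a) * ((0) + (1)*b + (-3)*d)) + (1/3)*(((0) + (1)*a) * ((4) + (-1)*b)) + (23/24)*(((0) + (1)*g) * ((0) + (1)*d)) + (23/24)*(((0) + (1)*g) * ((6) + (-1)*b + (-1)*d)) + (1/24)*(((0) + (1)*g) * ((4) + (-1)*b))" by algebra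
              show ?thesis using b1 b2 b3 b4 b5 b6 b7 k1 k4 k7 k35 c39 c48 c50 p51 p52 p53 p54 p55 e56 by argo
            next
              assume c57: "((((b - d) - d) - d)) + (d - (((b - d) - d) - d)) \<le> 1"
              have p58: "0 \<le> ((0) + (1)*a) * ((1) + (-1)*d)" by (rule mult_nonneg_nonneg) (use b1 b2 b3 b4 b5 b6 b7 k1 k4 k7 k35 c39 c48 c57 in linarith)+
              have p59: "0 \<le> ((0) + (1)*g) * ((4) + (-1)*b)" by (rule mult_nonneg_nonneg) (use b1 b2 b3 b4 b5 b6 b7 k1 k4 k7 k35 c39 c48 c57 in linarith)+
              have e60: "5 - (a*d + b*g) = (1)*((1) + (-1)*a) + (4)*((1) + (-1)*g) + (1)*(((0) + (1)*a) * ((1) + (-1)*d)) + (1)*(((0) + (1)*g) * ((4) + (-1)*b))" by algebra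
              show ?thesis using b1 b2 b3 b4 b5 b6 b7 k1 k4 k7 k35 c39 c48 c57 p58 p59 e60 by argo
            qed
          qed
        qed
      next
        case False
        note k61 = False
        have q62: "par (((a + g) + g), ((b - d) - d), g, d) = ((((a + g) + g)), (((b - d) - d)), (g + ((a + g) + g)), (d - ((b - d) - d)))" using k61 by (simp add: par_def)
        have v63: "UT ((((a + g) + g)), (((b - d) - d)), (g + ((a + g) + g)), (d - ((b - d) - d)))" using u3 q2 q5 q62 by simp
        show ?thesis
        proof (cases "(d - ((b - d) - d)) \<le> (((b - d) - d))")
          case True
          note k64 = True
          have q65: "par ((((a + g) + g)), (((b - d) - d)), (g + ((a + g) + g)), (d - ((b - d) - d))) = (((((a + g) + g)) + (g + ((a + g) + g))), ((((b - d) - d)) - (d - ((b - d) - d))), ((g + ((a + g) + g))), ((d - ((b - d) - d))))" using k64 by (simp add: par_def)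
          have v66: "UT (((((a + g) + g)) + (g + ((a + g) + g))), ((((b - d) - d)) - (d - ((b - d) - d))), ((g + ((a + g) + g))), ((d - ((b - d) - d))))" using u4 q2 q5 q62 q65 by simp
          have h67: "a + g \<le> 1 \<or> b + d \<le> 6" using u0 by (simp add: UT_def U_def)
          have c68: "b + d \<le> 6"
          proof (rule disjE[OF h67])
            assume "a + g \<le> 1" then show ?thesis using b1 b2 b3 b4 b5 b6 b7 k1 k4 k61 k64 by linarith
          next
            assume "b + d \<le> 6" then show ?thesis .
          qed
          have h69: "(a + g) + g \<le> 2 \<or> (b - d) + d \<le> 4" using v3 by (simp add: UT_def U_def)
          show ?thesis
          proof (rule disjE[OF h69])
            assume c70: "(a + g) + g \<le> 2"
            have p71: "0 \<le> ((0) + (1)*a) * ((0) + (2)*b + (-5)*d)" by (rule mult_nonneg_nonneg) (use b1 b2 b3 b4 b5 b6 b7 k1 k4 k61 k64 c68 c70 in linarith)+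
            have p72: "0 \<le> ((0) + (1)*a) * ((6) + (-1)*b + (-1)*d)" by (rule mult_nonneg_nonneg) (use b1 b2 b3 b4 b5 b6 b7 k1 k4 k61 k64 c68 c70 in linarith)+
            have p73: "0 \<le> ((0) + (1)*g) * ((0) + (1)*d)" by (rule mult_nonneg_nonneg) (use b1 b2 b3 b4 b5 b6 b7 k1 k4 k61 k64 c68 c70 in linarith)+
            have p74: "0 \<le> ((0) + (1)*g) * ((6) + (-1)*b + (-1)*d)" by (rule mult_nonneg_nonneg) (use b1 b2 b3 b4 b5 b6 b7 k1 k4 k61 k64 c68 c70 in linarith)+
            have p75: "0 \<le> ((0) + (1)*g) * ((0) + (-1)*b + (3)*d)" by (rule mult_nonneg_nonneg) (use b1 b2 b3 b4 b5 b6 b7 k1 k4 k61 k64 c68 c70 in linarith)+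
            have e76: "5 - (a*d + b*g) = (11/7)*((1) + (-1)*g) + (12/7)*((2) + (-1)*a + (-2)*g) + (1/7)*(((0) + (1)*a) * ((0) + (2)*b + (-5)*d)) + (2/7)*(((0) + (1)*a) * ((6) + (-1)*b + (-1)*d)) + (1/3)*(((0) + (1)*g) * ((0) + (1)*d)) + (5/6)*(((0) + (1)*g) * ((6) + (-1)*b + (-1)*d)) + (1/6)*(((0) + (1)*g) * ((0) + (-1)*b + (3)*d))" by algebra
            show ?thesis using b1 b2 b3 b4 b5 b6 b7 k1 k4 k61 k64 c68 c70 p71 p72 p73 p74 p75 e76 by argo
          next
            assume c77: "(b - d) + d \<le> 4"
            have h78: "(((a + g) + g)) + (g + ((a + g) + g)) \<le> 6 \<or> (((b - d) - d)) + (d - ((b - d) - d)) \<le> 1" using v63 by (simp add: UT_def U_def)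
            show ?thesis
            proof (rule disjE[OF h78])
              assume c79: "(((a + g) + g)) + (g + ((a + g) + g)) \<le> 6"
              have p80: "0 \<le> ((0) + (1)*a) * ((0) + (2)*b + (-5)*d)" by (rule mult_nonneg_nonneg) (use b1 b2 b3 b4 b5 b6 b7 k1 k4 k61 k64 c68 c77 c79 in linarith)+
              have p81: "0 \<le> ((0) + (1)*a) * ((4) + (-1)*b)" by (rule mult_nonneg_nonneg) (use b1 b2 b3 b4 b5 b6 b7 k1 k4 k61 k64 c68 c77 c79 in linarith)+
              have p82: "0 \<le> ((0) + (1)*g) * ((0) + (1)*d)" by (rule mult_nonneg_nonneg) (use b1 b2 b3 b4 b5 b6 b7 k1 k4 k61 k64 c68 c77 c79 in linarith)+
              have p83: "0 \<le> ((0) + (1)*g) * ((6) + (-1)*b + (-1)*d)" by (rule mult_nonneg_nonneg) (use b1 b2 b3 b4 b5 b6 b7 k1 k4 k61 k64 c68 c77 c79 in linarith)+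
              have p84: "0 \<le> ((0) + (1)*g) * ((4) + (-1)*b)" by (rule mult_nonneg_nonneg) (use b1 b2 b3 b4 b5 b6 b7 k1 k4 k61 k64 c68 c77 c79 in linarith)+
              have e85: "5 - (a*d + b*g) = (1/5)*((1) + (-1)*g) + (4/5)*((6) + (-2)*a + (-5)*g) + (1/5)*(((0) + (1)*a) * ((0) + (2)*b + (-5)*d)) + (2/5)*(((0) + (1)*a) * ((4) + (-1)*b)) + (1/10)*(((0) + (1)*g) * ((0) + (1)*d)) + (1/10)*(((0) + (1)*g) * ((6) + (-1)*b + (-1)*d)) + (9/10)*(((0) + (1)*g) * ((4) + (-1)*b))" by algebra
              show ?thesis using b1 b2 b3 b4 b5 b6 b7 k1 k4 k61 k64 c68 c77 c79 p80 p81 p82 p83 p84 e85 by argo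
            next
              assume c86: "(((b - d) - d)) + (d - ((b - d) - d)) \<le> 1"
              have p87: "0 \<le> ((0) + (1)*a) * ((1) + (-1)*d)" by (rule mult_nonneg_nonneg) (use b1 b2 b3 b4 b5 b6 b7 k1 k4 k61 k64 c68 c77 c86 in linarith)+
              have p88: "0 \<le> ((0) + (1)*g) * ((4) + (-1)*b)" by (rule mult_nonneg_nonneg) (use b1 b2 b3 b4 b5 b6 b7 k1 k4 k61 k64 c68 c77 c86 in linarith)+
              have e89: "5 - (a*d + b*g) = (1)*((1) + (-1)*a) + (4)*((1) + (-1)*g) + (1)*(((0) + (1)*a) * ((1) + (-1)*d)) + (1)*(((0) + (1)*g) * ((4) + (-1)*b))" by algebra
              show ?thesis using b1 b2 b3 b4 b5 b6 b7 k1 k4 k61 k64 c68 c77 c86 p87 p88 e89 by argo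
            qed
          qed
        next
          case False
          note k90 = False
          have q91: "par ((((a + g) + g)), (((b - d) - d)), (g + ((a + g) + g)), (d - ((b - d) - d))) = (((((a + g) + g))), ((((b - d) - d))), ((g + ((a + g) + g)) + (((a + g) + g))), ((d - ((b - d) - d)) - (((b - d) - d))))" using k90 by (simp add: par_def)
          have v92: "UT (((((a + g) + g))), ((((b - d) - d))), ((g + ((a + g) + g)) + (((a + g) + g))), ((d - ((b - d) - d)) - (((b - d) - d))))" using u4 q2 q5 q62 q91 by simp
          have h93: "a + g \<le> 1 \<or> b + d \<le> 6" using u0 by (simp add: UT_def U_def)
          have c94: "b + d \<le> 6"
          proof (rule disjE[OF h93])
            assume "a + g \<le> 1" then show ?thesis using b1 b2 b3 b4 b5 b6 b7 k1 k4 k61 k90 by linarith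
          next
            assume "b + d \<le> 6" then show ?thesis .
          qed
          have h95: "(a + g) + g \<le> 2 \<or> (b - d) + d \<le> 4" using v3 by (simp add: UT_def U_def)
          show ?thesis
          proof (rule disjE[OF h95])
            assume c96: "(a + g) + g \<le> 2"
            have p97: "0 \<le> ((0) + (1)*a) * ((0) + (1)*b + (-2)*d)" by (rule mult_nonneg_nonneg) (use b1 b2 b3 b4 b5 b6 b7 k1 k4 k61 k90 c94 c96 in linarith)+
            have p98: "0 \<le> ((0) + (1)*a) * ((6) + (-1)*b + (-1)*d)" by (rule mult_nonneg_nonneg) (use b1 b2 b3 b4 b5 b6 b7 k1 k4 k61 k90 c94 c96 in linarith)+
            have p99: "0 \<le> ((0) + (1)*g) * ((0) + (1)*d)" by (rule mult_nonneg_nonneg) (use b1 b2 b3 b4 b5 b6 b7 k1 k4 k61 k90 c94 c96 in linarith)+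
            have p100: "0 \<le> ((0) + (1)*g) * ((6) + (-1)*b + (-1)*d)" by (rule mult_nonneg_nonneg) (use b1 b2 b3 b4 b5 b6 b7 k1 k4 k61 k90 c94 c96 in linarith)+
            have p101: "0 \<le> ((0) + (1)*g) * ((0) + (-1)*b + (3)*d)" by (rule mult_nonneg_nonneg) (use b1 b2 b3 b4 b5 b6 b7 k1 k4 k61 k90 c94 c96 in linarith)+
            have e102: "5 - (a*d + b*g) = (1)*((1) + (-1)*g) + (2)*((2) + (-1)*a + (-2)*g) + (1/3)*(((0) + (1)*a) * ((0) + (1)*b + (-2)*d)) + (1/3)*(((0) + (1)*a) * ((6) + (-1)*b + (-1)*d)) + (1/3)*(((0) + (1)*g) * ((0) + (1)*d)) + (5/6)*(((0) + (1)*g) * ((6) + (-1)*b + (-1)*d)) + (1/6)*(((0) + (1)*g) * ((0) + (-1)*b + (3)*d))" by algebra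
            show ?thesis using b1 b2 b3 b4 b5 b6 b7 k1 k4 k61 k90 c94 c96 p97 p98 p99 p100 p101 e102 by argo
          next
            assume c103: "(b - d) + d \<le> 4"
            have h104: "(((a + g) + g)) + (g + ((a + g) + g)) \<le> 6 \<or> (((b - d) - d)) + (d - ((b - d) - d)) \<le> 1" using v63 by (simp add: UT_def U_def)
            show ?thesis
            proof (rule disjE[OF h104])
              assume c105: "(((a + g) + g)) + (g + ((a + g) + g)) \<le> 6"
              have h106: "((((a + g) + g))) + ((g + ((a + g) + g)) + (((a + g) + g))) \<le> 6 \<or> ((((b - d) - d))) + ((d - ((b - d) - d)) - (((b - d) - d))) \<le> 1" using v92 by (simp add: UT_def U_def)
              show ?thesis
              proof (rule disjE[OF h106])
                assume c107: "((((a + g) + g))) + ((g + ((a + g) + g)) + (((a + g) + g))) \<le> 6"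
                have p108: "0 \<le> ((0) + (1)*a) * ((0) + (1)*b + (-2)*d)" by (rule mult_nonneg_nonneg) (use b1 b2 b3 b4 b5 b6 b7 k1 k4 k61 k90 c94 c103 c105 c107 in linarith)+
                have p109: "0 \<le> ((0) + (1)*a) * ((6) + (-1)*b + (-1)*d)" by (rule mult_nonneg_nonneg) (use b1 b2 b3 b4 b5 b6 b7 k1 k4 k61 k90 c94 c103 c105 c107 in linarith)+
                have p110: "0 \<le> ((0) + (1)*g) * ((0) + (1)*d)" by (rule mult_nonneg_nonneg) (use b1 b2 b3 b4 b5 b6 b7 k1 k4 k61 k90 c94 c103 c105 c107 in linarith)+
                have p111: "0 \<le> ((0) + (1)*g) * ((6) + (-1)*b + (-1)*d)" by (rule mult_nonneg_nonneg) (use b1 b2 b3 b4 b5 b6 b7 k1 k4 k61 k90 c94 c103 c105 c107 in linarith)+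
                have e112: "5 - (a*d + b*g) = (1)*((6) + (-3)*a + (-7)*g) + (1)*((-1) + (1)*a + (1)*g) + (1/3)*(((0) + (1)*a) * ((0) + (1)*b + (-2)*d)) + (1/3)*(((0) + (1)*a) * ((6) + (-1)*b + (-1)*d)) + (1)*(((0) + (1)*g) * ((0) + (1)*d)) + (1)*(((0) + (1)*g) * ((6) + (-1)*b + (-1)*d))" by algebra
                show ?thesis using b1 b2 b3 b4 b5 b6 b7 k1 k4 k61 k90 c94 c103 c105 c107 p108 p109 p110 p111 e112 by argo
              next
                assume c113: "((((b - d) - d))) + ((d - ((b - d) - d)) - (((b - d) - d))) \<le> 1"
                have p114: "0 \<le> ((0) + (1)*a) * ((4) + (-1)*b)" by (rule mult_nonneg_nonneg) (use b1 b2 b3 b4 b5 b6 b7 k1 k4 k61 k90 c94 c103 c105 c113 in linarith)+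
                have p115: "0 \<le> ((0) + (1)*a) * ((1) + (1)*b + (-3)*d)" by (rule mult_nonneg_nonneg) (use b1 b2 b3 b4 b5 b6 b7 k1 k4 k61 k90 c94 c103 c105 c113 in linarith)+
                have p116: "0 \<le> ((0) + (1)*g) * ((0) + (1)*d)" by (rule mult_nonneg_nonneg) (use b1 b2 b3 b4 b5 b6 b7 k1 k4 k61 k90 c94 c103 c105 c113 in linarith)+
                have p117: "0 \<le> ((0) + (1)*g) * ((6) + (-1)*b + (-1)*d)" by (rule mult_nonneg_nonneg) (use b1 b2 b3 b4 b5 b6 b7 k1 k4 k61 k90 c94 c103 c105 c113 in linarith)+
                have p118: "0 \<le> ((0) + (1)*g) * ((4) + (-1)*b)" by (rule mult_nonneg_nonneg) (use b1 b2 b3 b4 b5 b6 b7 k1 k4 k61 k90 c94 c103 c105 c113 in linarith)+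
                have e119: "5 - (a*d + b*g) = (5/6)*((6) + (-2)*a + (-5)*g) + (1/3)*(((0) + (1)*a) * ((4) + (-1)*b)) + (1/3)*(((0) + (1)*a) * ((1) + (1)*b + (-3)*d)) + (1/12)*(((0) + (1)*g) * ((0) + (1)*d)) + (1/12)*(((0) + (1)*g) * ((6) + (-1)*b + (-1)*d)) + (11/12)*(((0) + (1)*g) * ((4) + (-1)*b))" by algebra
                show ?thesis using b1 b2 b3 b4 b5 b6 b7 k1 k4 k61 k90 c94 c103 c105 c113 p114 p115 p116 p117 p118 e119 by argo
              qed
            next
              assume c120: "(((b - d) - d)) + (d - ((b - d) - d)) \<le> 1"
              have p121: "0 \<le> ((0) + (1)*a) * ((1) + (-1)*d)" by (rule mult_nonneg_nonneg) (use b1 b2 b3 b4 b5 b6 b7 k1 k4 k61 k90 c94 c103 c120 in linarith)+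
              have p122: "0 \<le> ((0) + (1)*g) * ((4) + (-1)*b)" by (rule mult_nonneg_nonneg) (use b1 b2 b3 b4 b5 b6 b7 k1 k4 k61 k90 c94 c103 c120 in linarith)+
              have e123: "5 - (a*d + b*g) = (1)*((1) + (-1)*a) + (4)*((1) + (-1)*g) + (1)*(((0) + (1)*a) * ((1) + (-1)*d)) + (1)*(((0) + (1)*g) * ((4) + (-1)*b))" by algebra
              show ?thesis using b1 b2 b3 b4 b5 b6 b7 k1 k4 k61 k90 c94 c103 c120 p121 p122 e123 by argo
            qed
          qed
        qed
      qed
    next
      case False
      note k124 = False
      have q125: "par ((a + g), (b - d), g, d) = (((a + g)), ((b - d)), (g + (a + g)), (d - (b - d)))" using k124 by (simp add: par_def)
      have v126: "UT (((a + g)), ((b - d)), (g + (a + g)), (d - (b - d)))" using u2 q2 q125 by simp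
      show ?thesis
      proof (cases "(d - (b - d)) \<le> ((b - d))")
        case True
        note k127 = True
        have q128: "par (((a + g)), ((b - d)), (g + (a + g)), (d - (b - d))) = ((((a + g)) + (g + (a + g))), (((b - d)) - (d - (b - d))), ((g + (a + g))), ((d - (b - d))))" using k127 by (simp add: par_def)
        have v129: "UT ((((a + g)) + (g + (a + g))), (((b - d)) - (d - (b - d))), ((g + (a + g))), ((d - (b - d))))" using u3 q2 q125 q128 by simp
        show ?thesis
        proof (cases "((d - (b - d))) \<le> (((b - d)) - (d - (b - d)))")
          case True
          note k130 = True
          have q131: "par ((((a + g)) + (g + (a + g))), (((b - d)) - (d - (b - d))), ((g + (a + g))), ((d - (b - d)))) = (((((a + g)) + (g + (a + g))) + ((g + (a + g)))), ((((b - d)) - (d - (b - d))) - ((d - (b - d)))), (((g + (a + g)))), (((d - (b - d)))))" using k130 by (simp add: par_def)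
          have v132: "UT (((((a + g)) + (g + (a + g))) + ((g + (a + g)))), ((((b - d)) - (d - (b - d))) - ((d - (b - d)))), (((g + (a + g)))), (((d - (b - d)))))" using u4 q2 q125 q128 q131 by simp
          have h133: "a + g \<le> 1 \<or> b + d \<le> 6" using u0 by (simp add: UT_def U_def)
          have c134: "b + d \<le> 6"
          proof (rule disjE[OF h133])
            assume "a + g \<le> 1" then show ?thesis using b1 b2 b3 b4 b5 b6 b7 k1 k124 k127 k130 by linarith
          next
            assume "b + d \<le> 6" then show ?thesis .
          qed
          have h135: "((a + g)) + (g + (a + g)) \<le> 4 \<or> ((b - d)) + (d - (b - d)) \<le> 2" using v126 by (simp add: UT_def U_def)
          show ?thesis
          proof (rule disjE[OF h135])
            assume c136: "((a + g)) + (g + (a + g)) \<le> 4"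
            have p137: "0 \<le> ((0) + (1)*a) * ((6) + (-1)*b + (-1)*d)" by (rule mult_nonneg_nonneg) (use b1 b2 b3 b4 b5 b6 b7 k1 k124 k127 k130 c134 c136 in linarith)+
            have p138: "0 \<le> ((1) + (-1)*a) * ((0) + (-1)*b + (2)*d)" by (rule mult_nonneg_nonneg) (use b1 b2 b3 b4 b5 b6 b7 k1 k124 k127 k130 c134 c136 in linarith)+
            have p139: "0 \<le> ((0) + (1)*g) * ((6) + (-1)*b + (-1)*d)" by (rule mult_nonneg_nonneg) (use b1 b2 b3 b4 b5 b6 b7 k1 k124 k127 k130 c134 c136 in linarith)+
            have p140: "0 \<le> ((1) + (-1)*g) * ((0) + (1)*b + (-1)*d)" by (rule mult_nonneg_nonneg) (use b1 b2 b3 b4 b5 b6 b7 k1 k124 k127 k130 c134 c136 in linarith)+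
            have e141: "5 - (a*d + b*g) = (1/6)*((6) + (-1)*b + (-1)*d) + (1)*((4) + (-2)*a + (-3)*g) + (1/3)*(((0) + (1)*a) * ((6) + (-1)*b + (-1)*d)) + (1/3)*(((1) + (-1)*a) * ((0) + (-1)*b + (2)*d)) + (1/2)*(((0) + (1)*g) * ((6) + (-1)*b + (-1)*d)) + (1/2)*(((1) + (-1)*g) * ((0) + (1)*b + (-1)*d))" by algebra
            show ?thesis using b1 b2 b3 b4 b5 b6 b7 k1 k124 k127 k130 c134 c136 p137 p138 p139 p140 e141 by argo
          next
            assume c142: "((b - d)) + (d - (b - d)) \<le> 2"
            have h143: "(((a + g)) + (g + (a + g))) + ((g + (a + g))) \<le> 6 \<or> (((b - d)) - (d - (b - d))) + ((d - (b - d))) \<le> 1" using v129 by (simp add: UT_def U_def)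
            show ?thesis
            proof (rule disjE[OF h143])
              assume c144: "(((a + g)) + (g + (a + g))) + ((g + (a + g))) \<le> 6"
              have p145: "0 \<le> ((0) + (1)*a) * ((2) + (-1)*d)" by (rule mult_nonneg_nonneg) (use b1 b2 b3 b4 b5 b6 b7 k1 k124 k127 k130 c134 c142 c144 in linarith)+
              have p146: "0 \<le> ((0) + (1)*g) * ((0) + (1)*d)" by (rule mult_nonneg_nonneg) (use b1 b2 b3 b4 b5 b6 b7 k1 k124 k127 k130 c134 c142 c144 in linarith)+
              have p147: "0 \<le> ((0) + (1)*g) * ((6) + (-1)*b + (-1)*d)" by (rule mult_nonneg_nonneg) (use b1 b2 b3 b4 b5 b6 b7 k1 k124 k127 k130 c134 c142 c144 in linarith)+
              have p148: "0 \<le> ((0) + (1)*g) * ((0) + (-1)*b + (2)*d)" by (rule mult_nonneg_nonneg) (use b1 b2 b3 b4 b5 b6 b7 k1 k124 k127 k130 c134 c142 c144 in linarith)+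
              have e149: "5 - (a*d + b*g) = (1)*((1) + (-1)*g) + (2/3)*((6) + (-3)*a + (-5)*g) + (1)*(((0) + (1)*a) * ((2) + (-1)*d)) + (1/6)*(((0) + (1)*g) * ((0) + (1)*d)) + (13/18)*(((0) + (1)*g) * ((6) + (-1)*b + (-1)*d)) + (5/18)*(((0) + (1)*g) * ((0) + (-1)*b + (2)*d))" by algebra
              show ?thesis using b1 b2 b3 b4 b5 b6 b7 k1 k124 k127 k130 c134 c142 c144 p145 p146 p147 p148 e149 by argo
            next
              assume c150: "(((b - d)) - (d - (b - d))) + ((d - (b - d))) \<le> 1"
              have p151: "0 \<le> ((0) + (1)*a) * ((0) + (3)*b + (-5)*d)" by (rule mult_nonneg_nonneg) (use b1 b2 b3 b4 b5 b6 b7 k1 k124 k127 k130 c134 c142 c150 in linarith)+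
              have p152: "0 \<le> ((0) + (1)*a) * ((1) + (-1)*b + (1)*d)" by (rule mult_nonneg_nonneg) (use b1 b2 b3 b4 b5 b6 b7 k1 k124 k127 k130 c134 c142 c150 in linarith)+
              have p153: "0 \<le> ((0) + (1)*g) * ((6) + (-1)*b + (-1)*d)" by (rule mult_nonneg_nonneg) (use b1 b2 b3 b4 b5 b6 b7 k1 k124 k127 k130 c134 c142 c150 in linarith)+
              have p154: "0 \<le> ((0) + (1)*g) * ((1) + (-1)*b + (1)*d)" by (rule mult_nonneg_nonneg) (use b1 b2 b3 b4 b5 b6 b7 k1 k124 k127 k130 c134 c142 c150 in linarith)+
              have e155: "5 - (a*d + b*g) = (3/2)*((1) + (-1)*a) + (7/2)*((1) + (-1)*g) + (1/2)*(((0) + (1)*a) * ((0) + (3)*b + (-5)*d)) + (3/2)*(((0) + (1)*a) * ((1) + (-1)*b + (1)*d)) + (1/2)*(((0) + (1)*g) * ((6) + (-1)*b + (-1)*d)) + (1/2)*(((0) + (1)*g) * ((1) + (-1)*b + (1)*d))" by algebra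
              show ?thesis using b1 b2 b3 b4 b5 b6 b7 k1 k124 k127 k130 c134 c142 c150 p151 p152 p153 p154 e155 by argo
            qed
          qed
        next
          case False
          note k156 = False
          have q157: "par ((((a + g)) + (g + (a + g))), (((b - d)) - (d - (b - d))), ((g + (a + g))), ((d - (b - d)))) = (((((a + g)) + (g + (a + g)))), ((((b - d)) - (d - (b - d)))), (((g + (a + g))) + (((a + g)) + (g + (a + g)))), (((d - (b - d))) - (((b - d)) - (d - (b - d)))))" using k156 by (simp add: par_def)
          have v158: "UT (((((a + g)) + (g + (a + g)))), ((((b - d)) - (d - (b - d)))), (((g + (a + g))) + (((a + g)) + (g + (a + g)))), (((d - (b - d))) - (((b - d)) - (d - (b - d)))))" using u4 q2 q125 q128 q157 by simp
          have h159: "a + g \<le> 1 \<or> b + d \<le> 6" using u0 by (simp add: UT_def U_def)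
          have c160: "b + d \<le> 6"
          proof (rule disjE[OF h159])
            assume "a + g \<le> 1" then show ?thesis using b1 b2 b3 b4 b5 b6 b7 k1 k124 k127 k156 by linarith
          next
            assume "b + d \<le> 6" then show ?thesis .
          qed
          have h161: "((a + g)) + (g + (a + g)) \<le> 4 \<or> ((b - d)) + (d - (b - d)) \<le> 2" using v126 by (simp add: UT_def U_def)
          show ?thesis
          proof (rule disjE[OF h161])
            assume c162: "((a + g)) + (g + (a + g)) \<le> 4"
            have p163: "0 \<le> ((0) + (1)*a) * ((0) + (2)*b + (-3)*d)" by (rule mult_nonneg_nonneg) (use b1 b2 b3 b4 b5 b6 b7 k1 k124 k127 k156 c160 c162 in linarith)+
            have p164: "0 \<le> ((0) + (1)*a) * ((6) + (-1)*b + (-1)*d)" by (rule mult_nonneg_nonneg) (use b1 b2 b3 b4 b5 b6 b7 k1 k124 k127 k156 c160 c162 in linarith)+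
            have p165: "0 \<le> ((0) + (1)*g) * ((6) + (-1)*b + (-1)*d)" by (rule mult_nonneg_nonneg) (use b1 b2 b3 b4 b5 b6 b7 k1 k124 k127 k156 c160 c162 in linarith)+
            have p166: "0 \<le> ((0) + (1)*g) * ((0) + (-1)*b + (2)*d)" by (rule mult_nonneg_nonneg) (use b1 b2 b3 b4 b5 b6 b7 k1 k124 k127 k156 c160 c162 in linarith)+
            have p167: "0 \<le> ((0) + (1)*g) * ((0) + (-3)*b + (5)*d)" by (rule mult_nonneg_nonneg) (use b1 b2 b3 b4 b5 b6 b7 k1 k124 k127 k156 c160 c162 in linarith)+
            have e168: "5 - (a*d + b*g) = (1/5)*((1) + (-1)*g) + (6/5)*((4) + (-2)*a + (-3)*g) + (1/5)*(((0) + (1)*a) * ((0) + (2)*b + (-3)*d)) + (2/5)*(((0) + (1)*a) * ((6) + (-1)*b + (-1)*d)) + (19/30)*(((0) + (1)*g) * ((6) + (-1)*b + (-1)*d)) + (1/15)*(((0) + (1)*g) * ((0) + (-1)*b + (2)*d)) + (1/10)*(((0) + (1)*g) * ((0) + (-3)*b + (5)*d))" by algebra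
            show ?thesis using b1 b2 b3 b4 b5 b6 b7 k1 k124 k127 k156 c160 c162 p163 p164 p165 p166 p167 e168 by argo
          next
            assume c169: "((b - d)) + (d - (b - d)) \<le> 2"
            have h170: "(((a + g)) + (g + (a + g))) + ((g + (a + g))) \<le> 6 \<or> (((b - d)) - (d - (b - d))) + ((d - (b - d))) \<le> 1" using v129 by (simp add: UT_def U_def)
            show ?thesis
            proof (rule disjE[OF h170])
              assume c171: "(((a + g)) + (g + (a + g))) + ((g + (a + g))) \<le> 6"
              have p172: "0 \<le> ((0) + (1)*a) * ((2) + (-1)*d)" by (rule mult_nonneg_nonneg) (use b1 b2 b3 b4 b5 b6 b7 k1 k124 k127 k156 c160 c169 c171 in linarith)+
              have p173: "0 \<le> ((0) + (1)*g) * ((0) + (1)*d)" by (rule mult_nonneg_nonneg) (use b1 b2 b3 b4 b5 b6 b7 k1 k124 k127 k156 c160 c169 c171 in linarith)+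
              have p174: "0 \<le> ((0) + (1)*g) * ((6) + (-1)*b + (-1)*d)" by (rule mult_nonneg_nonneg) (use b1 b2 b3 b4 b5 b6 b7 k1 k124 k127 k156 c160 c169 c171 in linarith)+
              have p175: "0 \<le> ((0) + (1)*g) * ((0) + (-1)*b + (2)*d)" by (rule mult_nonneg_nonneg) (use b1 b2 b3 b4 b5 b6 b7 k1 k124 k127 k156 c160 c169 c171 in linarith)+
              have e176: "5 - (a*d + b*g) = (1)*((1) + (-1)*g) + (2/3)*((6) + (-3)*a + (-5)*g) + (1)*(((0) + (1)*a) * ((2) + (-1)*d)) + (1/6)*(((0) + (1)*g) * ((0) + (1)*d)) + (13/18)*(((0) + (1)*g) * ((6) + (-1)*b + (-1)*d)) + (5/18)*(((0) + (1)*g) * ((0) + (-1)*b + (2)*d))" by algebra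
              show ?thesis using b1 b2 b3 b4 b5 b6 b7 k1 k124 k127 k156 c160 c169 c171 p172 p173 p174 p175 e176 by argo
            next
              assume c177: "(((b - d)) - (d - (b - d))) + ((d - (b - d))) \<le> 1"
              have p178: "0 \<le> ((0) + (1)*a) * ((2) + (-1)*d)" by (rule mult_nonneg_nonneg) (use b1 b2 b3 b4 b5 b6 b7 k1 k124 k127 k156 c160 c169 c177 in linarith)+
              have p179: "0 \<le> ((0) + (1)*g) * ((0) + (2)*b + (-3)*d)" by (rule mult_nonneg_nonneg) (use b1 b2 b3 b4 b5 b6 b7 k1 k124 k127 k156 c160 c169 c177 in linarith)+
              have p180: "0 \<le> ((0) + (1)*g) * ((1) + (-1)*b + (1)*d)" by (rule mult_nonneg_nonneg) (use b1 b2 b3 b4 b5 b6 b7 k1 k124 k127 k156 c160 c169 c177 in linarith)+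
              have e181: "5 - (a*d + b*g) = (2)*((1) + (-1)*a) + (3)*((1) + (-1)*g) + (1)*(((0) + (1)*a) * ((2) + (-1)*d)) + (1)*(((0) + (1)*g) * ((0) + (2)*b + (-3)*d)) + (3)*(((0) + (1)*g) * ((1) + (-1)*b + (1)*d))" by algebra
              show ?thesis using b1 b2 b3 b4 b5 b6 b7 k1 k124 k127 k156 c160 c169 c177 p178 p179 p180 e181 by argo
            qed
          qed
        qed
      next
        case False
        note k182 = False
        have q183: "par (((a + g)), ((b - d)), (g + (a + g)), (d - (b - d))) = ((((a + g))), (((b - d))), ((g + (a + g)) + ((a + g))), ((d - (b - d)) - ((b - d))))" using k182 by (simp add: par_def)
        have v184: "UT ((((a + g))), (((b - d))), ((g + (a + g)) + ((a + g))), ((d - (b - d)) - ((b - d))))" using u3 q2 q125 q183 by simp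
        show ?thesis
        proof (cases "((d - (b - d)) - ((b - d))) \<le> (((b - d)))")
          case True
          note k185 = True
          have q186: "par ((((a + g))), (((b - d))), ((g + (a + g)) + ((a + g))), ((d - (b - d)) - ((b - d)))) = (((((a + g))) + ((g + (a + g)) + ((a + g)))), ((((b - d))) - ((d - (b - d)) - ((b - d)))), (((g + (a + g)) + ((a + g)))), (((d - (b - d)) - ((b - d)))))" using k185 by (simp add: par_def)
          have v187: "UT (((((a + g))) + ((g + (a + g)) + ((a + g)))), ((((b - d))) - ((d - (b - d)) - ((b - d)))), (((g + (a + g)) + ((a + g)))), (((d - (b - d)) - ((b - d)))))" using u4 q2 q125 q183 q186 by simp
          have h188: "a + g \<le> 1 \<or> b + d \<le> 6" using u0 by (simp add: UT_def U_def)
          have c189: "b + d \<le> 6"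
          proof (rule disjE[OF h188])
            assume "a + g \<le> 1" then show ?thesis using b1 b2 b3 b4 b5 b6 b7 k1 k124 k182 k185 by linarith
          next
            assume "b + d \<le> 6" then show ?thesis .
          qed
          have h190: "((a + g)) + (g + (a + g)) \<le> 4 \<or> ((b - d)) + (d - (b - d)) \<le> 2" using v126 by (simp add: UT_def U_def)
          show ?thesis
          proof (rule disjE[OF h190])
            assume c191: "((a + g)) + (g + (a + g)) \<le> 4"
            have p192: "0 \<le> ((0) + (1)*a) * ((0) + (3)*b + (-4)*d)" by (rule mult_nonneg_nonneg) (use b1 b2 b3 b4 b5 b6 b7 k1 k124 k182 k185 c189 c191 in linarith)+
            have p193: "0 \<le> ((0) + (1)*a) * ((6) + (-1)*b + (-1)*d)" by (rule mult_nonneg_nonneg) (use b1 b2 b3 b4 b5 b6 b7 k1 k124 k182 k185 c189 c191 in linarith)+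
            have p194: "0 \<le> ((0) + (1)*g) * ((6) + (-1)*b + (-1)*d)" by (rule mult_nonneg_nonneg) (use b1 b2 b3 b4 b5 b6 b7 k1 k124 k182 k185 c189 c191 in linarith)+
            have p195: "0 \<le> ((0) + (1)*g) * ((0) + (-1)*b + (2)*d)" by (rule mult_nonneg_nonneg) (use b1 b2 b3 b4 b5 b6 b7 k1 k124 k182 k185 c189 c191 in linarith)+
            have p196: "0 \<le> ((0) + (1)*g) * ((0) + (-2)*b + (3)*d)" by (rule mult_nonneg_nonneg) (use b1 b2 b3 b4 b5 b6 b7 k1 k124 k182 k185 c189 c191 in linarith)+
            have e197: "5 - (a*d + b*g) = (1/7)*((1) + (-1)*a) + (17/14)*((4) + (-2)*a + (-3)*g) + (1/7)*(((0) + (1)*a) * ((0) + (3)*b + (-4)*d)) + (3/7)*(((0) + (1)*a) * ((6) + (-1)*b + (-1)*d)) + (17/28)*(((0) + (1)*g) * ((6) + (-1)*b + (-1)*d)) + (1/28)*(((0) + (1)*g) * ((0) + (-1)*b + (2)*d)) + (5/28)*(((0) + (1)*g) * ((0) + (-2)*b + (3)*d))" by algebra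
            show ?thesis using b1 b2 b3 b4 b5 b6 b7 k1 k124 k182 k185 c189 c191 p192 p193 p194 p195 p196 e197 by argo
          next
            assume c198: "((b - d)) + (d - (b - d)) \<le> 2"
            have p199: "0 \<le> ((0) + (1)*a) * ((2) + (-1)*d)" by (rule mult_nonneg_nonneg) (use b1 b2 b3 b4 b5 b6 b7 k1 k124 k182 k185 c189 c198 in linarith)+
            have p200: "0 \<le> ((0) + (1)*g) * ((2) + (-1)*d)" by (rule mult_nonneg_nonneg) (use b1 b2 b3 b4 b5 b6 b7 k1 k124 k182 k185 c189 c198 in linarith)+
            have p201: "0 \<le> ((0) + (1)*g) * ((0) + (-2)*b + (3)*d)" by (rule mult_nonneg_nonneg) (use b1 b2 b3 b4 b5 b6 b7 k1 k124 k182 k185 c189 c198 in linarith)+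
            have e202: "5 - (a*d + b*g) = (2)*((1) + (-1)*a) + (3)*((1) + (-1)*g) + (1)*(((0) + (1)*a) * ((2) + (-1)*d)) + (3/2)*(((0) + (1)*g) * ((2) + (-1)*d)) + (1/2)*(((0) + (1)*g) * ((0) + (-2)*b + (3)*d))" by algebra
            show ?thesis using b1 b2 b3 b4 b5 b6 b7 k1 k124 k182 k185 c189 c198 p199 p200 p201 e202 by argo
          qed
        next
          case False
          note k203 = False
          have q204: "par ((((a + g))), (((b - d))), ((g + (a + g)) + ((a + g))), ((d - (b - d)) - ((b - d)))) = (((((a + g)))), ((((b - d)))), (((g + (a + g)) + ((a + g))) + (((a + g)))), (((d - (b - d)) - ((b - d))) - (((b - d)))))" using k203 by (simp add: par_def)
          have v205: "UT (((((a + g)))), ((((b - d)))), (((g + (a + g)) + ((a + g))) + (((a + g)))), (((d - (b - d)) - ((b - d))) - (((b - d)))))" using u4 q2 q125 q183 q204 by simp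
          have h206: "a + g \<le> 1 \<or> b + d \<le> 6" using u0 by (simp add: UT_def U_def)
          have c207: "b + d \<le> 6"
          proof (rule disjE[OF h206])
            assume "a + g \<le> 1" then show ?thesis using b1 b2 b3 b4 b5 b6 b7 k1 k124 k182 k203 by linarith
          next
            assume "b + d \<le> 6" then show ?thesis .
          qed
          have h208: "((((a + g)))) + (((g + (a + g)) + ((a + g))) + (((a + g)))) \<le> 4 \<or> ((((b - d)))) + (((d - (b - d)) - ((b - d))) - (((b - d)))) \<le> 2" using v205 by (simp add: UT_def U_def)
          have c209: "((((b - d)))) + (((d - (b - d)) - ((b - d))) - (((b - d)))) \<le> 2"
          proof (rule disjE[OF h208])
            assume "((((a + g)))) + (((g + (a + g)) + ((a + g))) + (((a + g)))) \<le> 4" then show ?thesis using b1 b2 b3 b4 b5 b6 b7 k1 k124 k182 k203 c207 by linarith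
          next
            assume "((((b - d)))) + (((d - (b - d)) - ((b - d))) - (((b - d)))) \<le> 2" then show ?thesis .
          qed
          have h210: "((a + g)) + (g + (a + g)) \<le> 4 \<or> ((b - d)) + (d - (b - d)) \<le> 2" using v126 by (simp add: UT_def U_def)
          show ?thesis
          proof (rule disjE[OF h210])
            assume c211: "((a + g)) + (g + (a + g)) \<le> 4"
            have p212: "0 \<le> ((0) + (1)*a) * ((6) + (-1)*b + (-1)*d)" by (rule mult_nonneg_nonneg) (use b1 b2 b3 b4 b5 b6 b7 k1 k124 k182 k203 c207 c209 c211 in linarith)+
            have p213: "0 \<le> ((1) + (-1)*a) * ((0) + (-1)*b + (2)*d)" by (rule mult_nonneg_nonneg) (use b1 b2 b3 b4 b5 b6 b7 k1 k124 k182 k203 c207 c209 c211 in linarith)+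
            have p214: "0 \<le> ((0) + (1)*g) * ((6) + (-1)*b + (-1)*d)" by (rule mult_nonneg_nonneg) (use b1 b2 b3 b4 b5 b6 b7 k1 k124 k182 k203 c207 c209 c211 in linarith)+
            have p215: "0 \<le> ((1) + (-1)*g) * ((0) + (1)*b + (-1)*d)" by (rule mult_nonneg_nonneg) (use b1 b2 b3 b4 b5 b6 b7 k1 k124 k182 k203 c207 c209 c211 in linarith)+
            have e216: "5 - (a*d + b*g) = (1/6)*((6) + (-1)*b + (-1)*d) + (1)*((4) + (-2)*a + (-3)*g) + (1/3)*(((0) + (1)*a) * ((6) + (-1)*b + (-1)*d)) + (1/3)*(((1) + (-1)*a) * ((0) + (-1)*b + (2)*d)) + (1/2)*(((0) + (1)*g) * ((6) + (-1)*b + (-1)*d)) + (1/2)*(((1) + (-1)*g) * ((0) + (1)*b + (-1)*d))" by algebra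
            show ?thesis using b1 b2 b3 b4 b5 b6 b7 k1 k124 k182 k203 c207 c209 c211 p212 p213 p214 p215 e216 by argo
          next
            assume c217: "((b - d)) + (d - (b - d)) \<le> 2"
            have p218: "0 \<le> ((0) + (1)*a) * ((2) + (-1)*d)" by (rule mult_nonneg_nonneg) (use b1 b2 b3 b4 b5 b6 b7 k1 k124 k182 k203 c207 c209 c217 in linarith)+
            have p219: "0 \<le> ((0) + (1)*g) * ((2) + (-1)*d)" by (rule mult_nonneg_nonneg) (use b1 b2 b3 b4 b5 b6 b7 k1 k124 k182 k203 c207 c209 c217 in linarith)+
            have p220: "0 \<le> ((0) + (1)*g) * ((0) + (-2)*b + (3)*d)" by (rule mult_nonneg_nonneg) (use b1 b2 b3 b4 b5 b6 b7 k1 k124 k182 k203 c207 c209 c217 in linarith)+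
            have e221: "5 - (a*d + b*g) = (2)*((1) + (-1)*a) + (3)*((1) + (-1)*g) + (1)*(((0) + (1)*a) * ((2) + (-1)*d)) + (3/2)*(((0) + (1)*g) * ((2) + (-1)*d)) + (1/2)*(((0) + (1)*g) * ((0) + (-2)*b + (3)*d))" by algebra
            show ?thesis using b1 b2 b3 b4 b5 b6 b7 k1 k124 k182 k203 c207 c209 c217 p218 p219 p220 e221 by argo
          qed
        qed
      qed
    qed
  next
    case False
    note k222 = False
    have q223: "par (a, b, g, d) = (a, b, (g + a), (d - b))" using k222 by (simp add: par_def)
    have v224: "UT (a, b, (g + a), (d - b))" using u1  q223 by simp
    show ?thesis
    proof (cases "(d - b) \<le> b")
      case True
      note k225 = True
      have q226: "par (a, b, (g + a), (d - b)) = ((a + (g + a)), (b - (d - b)), ((g + a)), ((d - b)))" using k225 by (simp add: par_def)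
      have v227: "UT ((a + (g + a)), (b - (d - b)), ((g + a)), ((d - b)))" using u2 q223 q226 by simp
      show ?thesis
      proof (cases "((d - b)) \<le> (b - (d - b))")
        case True
        note k228 = True
        have q229: "par ((a + (g + a)), (b - (d - b)), ((g + a)), ((d - b))) = (((a + (g + a)) + ((g + a))), ((b - (d - b)) - ((d - b))), (((g + a))), (((d - b))))" using k228 by (simp add: par_def)
        have v230: "UT (((a + (g + a)) + ((g + a))), ((b - (d - b)) - ((d - b))), (((g + a))), (((d - b))))" using u3 q223 q226 q229 by simp
        show ?thesis
        proof (cases "(((d - b))) \<le> ((b - (d - b)) - ((d - b)))")
          case True
          note k231 = True
          have q232: "par (((a + (g + a)) + ((g + a))), ((b - (d - b)) - ((d - b))), (((g + a))), (((d - b)))) = ((((a + (g + a)) + ((g + a))) + (((g + a)))), (((b - (d - b)) - ((d - b))) - (((d - b)))), ((((g + a)))), ((((d - b)))))" using k231 by (simp add: par_def)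
          have v233: "UT ((((a + (g + a)) + ((g + a))) + (((g + a)))), (((b - (d - b)) - ((d - b))) - (((d - b)))), ((((g + a)))), ((((d - b)))))" using u4 q223 q226 q229 q232 by simp
          have h234: "a + g \<le> 1 \<or> b + d \<le> 6" using u0 by (simp add: UT_def U_def)
          have c235: "b + d \<le> 6"
          proof (rule disjE[OF h234])
            assume "a + g \<le> 1" then show ?thesis using b1 b2 b3 b4 b5 b6 b7 k222 k225 k228 k231 by linarith
          next
            assume "b + d \<le> 6" then show ?thesis .
          qed
          have h236: "(((a + (g + a)) + ((g + a))) + (((g + a)))) + ((((g + a)))) \<le> 4 \<or> (((b - (d - b)) - ((d - b))) - (((d - b)))) + ((((d - b)))) \<le> 2" using v233 by (simp add: UT_def U_def)
          have c237: "(((b - (d - b)) - ((d - b))) - (((d - b)))) + ((((d - b)))) \<le> 2"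
          proof (rule disjE[OF h236])
            assume "(((a + (g + a)) + ((g + a))) + (((g + a)))) + ((((g + a)))) \<le> 4" then show ?thesis using b1 b2 b3 b4 b5 b6 b7 k222 k225 k228 k231 c235 by linarith
          next
            assume "(((b - (d - b)) - ((d - b))) - (((d - b)))) + ((((d - b)))) \<le> 2" then show ?thesis .
          qed
          have h238: "(a + (g + a)) + ((g + a)) \<le> 4 \<or> (b - (d - b)) + ((d - b)) \<le> 2" using v227 by (simp add: UT_def U_def)
          show ?thesis
          proof (rule disjE[OF h238])
            assume c239: "(a + (g + a)) + ((g + a)) \<le> 4"
            have p240: "0 \<le> ((0) + (1)*a) * ((0) + (4)*b + (-3)*d)" by (rule mult_nonneg_nonneg) (use b1 b2 b3 b4 b5 b6 b7 k222 k225 k228 k231 c235 c237 c239 in linarith)+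
            have p241: "0 \<le> ((0) + (1)*a) * ((6) + (-1)*b + (-1)*d)" by (rule mult_nonneg_nonneg) (use b1 b2 b3 b4 b5 b6 b7 k222 k225 k228 k231 c235 c237 c239 in linarith)+
            have p242: "0 \<le> ((1) + (-1)*a) * ((2) + (-3)*b + (2)*d)" by (rule mult_nonneg_nonneg) (use b1 b2 b3 b4 b5 b6 b7 k222 k225 k228 k231 c235 c237 c239 in linarith)+
            have p243: "0 \<le> ((0) + (1)*g) * ((6) + (-1)*b + (-1)*d)" by (rule mult_nonneg_nonneg) (use b1 b2 b3 b4 b5 b6 b7 k222 k225 k228 k231 c235 c237 c239 in linarith)+
            have p244: "0 \<le> ((0) + (1)*g) * ((2) + (-3)*b + (2)*d)" by (rule mult_nonneg_nonneg) (use b1 b2 b3 b4 b5 b6 b7 k222 k225 k228 k231 c235 c237 c239 in linarith)+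
            have p245: "0 \<le> ((1) + (-1)*g) * ((0) + (1)*b)" by (rule mult_nonneg_nonneg) (use b1 b2 b3 b4 b5 b6 b7 k222 k225 k228 k231 c235 c237 c239 in linarith)+
            have p246: "0 \<le> ((1) + (-1)*g) * ((0) + (2)*b + (-1)*d)" by (rule mult_nonneg_nonneg) (use b1 b2 b3 b4 b5 b6 b7 k222 k225 k228 k231 c235 c237 c239 in linarith)+
            have e247: "5 - (a*d + b*g) = (1/16)*((6) + (-1)*b + (-1)*d) + (11/10)*((4) + (-3)*a + (-2)*g) + (1/16)*(((0) + (1)*a) * ((0) + (4)*b + (-3)*d)) + (47/80)*(((0) + (1)*a) * ((6) + (-1)*b + (-1)*d)) + (9/80)*(((1) + (-1)*a) * ((2) + (-3)*b + (2)*d)) + (27/80)*(((0) + (1)*g) * ((6) + (-1)*b + (-1)*d)) + (7/80)*(((0) + (1)*g) * ((2) + (-3)*b + (2)*d)) + (3/40)*(((1) + (-1)*g) * ((0) + (1)*b)) + (13/80)*(((1) + (-1)*g) * ((0) + (2)*b + (-1)*d))" by algebra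
            show ?thesis using b1 b2 b3 b4 b5 b6 b7 k222 k225 k228 k231 c235 c237 c239 p240 p241 p242 p243 p244 p245 p246 e247 by argo
          next
            assume c248: "(b - (d - b)) + ((d - b)) \<le> 2"
            have p249: "0 \<le> ((0) + (1)*a) * ((0) + (4)*b + (-3)*d)" by (rule mult_nonneg_nonneg) (use b1 b2 b3 b4 b5 b6 b7 k222 k225 k228 k231 c235 c237 c248 in linarith)+
            have p250: "0 \<le> ((0) + (1)*a) * ((2) + (-1)*b)" by (rule mult_nonneg_nonneg) (use b1 b2 b3 b4 b5 b6 b7 k222 k225 k228 k231 c235 c237 c248 in linarith)+
            have p251: "0 \<le> ((0) + (1)*g) * ((6) + (-1)*b + (-1)*d)" by (rule mult_nonneg_nonneg) (use b1 b2 b3 b4 b5 b6 b7 k222 k225 k228 k231 c235 c237 c248 in linarith)+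
            have p252: "0 \<le> ((0) + (1)*g) * ((2) + (-3)*b + (2)*d)" by (rule mult_nonneg_nonneg) (use b1 b2 b3 b4 b5 b6 b7 k222 k225 k228 k231 c235 c237 c248 in linarith)+
            have p253: "0 \<le> ((0) + (1)*g) * ((2) + (-1)*b)" by (rule mult_nonneg_nonneg) (use b1 b2 b3 b4 b5 b6 b7 k222 k225 k228 k231 c235 c237 c248 in linarith)+
            have e254: "5 - (a*d + b*g) = (8/3)*((1) + (-1)*a) + (7/3)*((1) + (-1)*g) + (1/3)*(((0) + (1)*a) * ((0) + (4)*b + (-3)*d)) + (4/3)*(((0) + (1)*a) * ((2) + (-1)*b)) + (1/6)*(((0) + (1)*g) * ((6) + (-1)*b + (-1)*d)) + (1/12)*(((0) + (1)*g) * ((2) + (-3)*b + (2)*d)) + (7/12)*(((0) + (1)*g) * ((2) + (-1)*b))" by algebra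
            show ?thesis using b1 b2 b3 b4 b5 b6 b7 k222 k225 k228 k231 c235 c237 c248 p249 p250 p251 p252 p253 e254 by argo
          qed
        next
          case False
          note k255 = False
          have q256: "par (((a + (g + a)) + ((g + a))), ((b - (d - b)) - ((d - b))), (((g + a))), (((d - b)))) = ((((a + (g + a)) + ((g + a)))), (((b - (d - b)) - ((d - b)))), ((((g + a))) + ((a + (g + a)) + ((g + a)))), ((((d - b))) - ((b - (d - b)) - ((d - b)))))" using k255 by (simp add: par_def)
          have v257: "UT ((((a + (g + a)) + ((g + a)))), (((b - (d - b)) - ((d - b)))), ((((g + a))) + ((a + (g + a)) + ((g + a)))), ((((d - b))) - ((b - (d - b)) - ((d - b)))))" using u4 q223 q226 q229 q256 by simp
          have h258: "a + g \<le> 1 \<or> b + d \<le> 6" using u0 by (simp add: UT_def U_def)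
          have c259: "b + d \<le> 6"
          proof (rule disjE[OF h258])
            assume "a + g \<le> 1" then show ?thesis using b1 b2 b3 b4 b5 b6 b7 k222 k225 k228 k255 by linarith
          next
            assume "b + d \<le> 6" then show ?thesis .
          qed
          have h260: "(a + (g + a)) + ((g + a)) \<le> 4 \<or> (b - (d - b)) + ((d - b)) \<le> 2" using v227 by (simp add: UT_def U_def)
          show ?thesis
          proof (rule disjE[OF h260])
            assume c261: "(a + (g + a)) + ((g + a)) \<le> 4"
            have p262: "0 \<le> ((0) + (1)*a) * ((0) + (3)*b + (-2)*d)" by (rule mult_nonneg_nonneg) (use b1 b2 b3 b4 b5 b6 b7 k222 k225 k228 k255 c259 c261 in linarith)+
            have p263: "0 \<le> ((0) + (1)*a) * ((6) + (-1)*b + (-1)*d)" by (rule mult_nonneg_nonneg) (use b1 b2 b3 b4 b5 b6 b7 k222 k225 k228 k255 c259 c261 in linarith)+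
            have p264: "0 \<le> ((0) + (1)*g) * ((6) + (-1)*b + (-1)*d)" by (rule mult_nonneg_nonneg) (use b1 b2 b3 b4 b5 b6 b7 k222 k225 k228 k255 c259 c261 in linarith)+
            have p265: "0 \<le> ((0) + (1)*g) * ((0) + (-1)*b + (1)*d)" by (rule mult_nonneg_nonneg) (use b1 b2 b3 b4 b5 b6 b7 k222 k225 k228 k255 c259 c261 in linarith)+
            have p266: "0 \<le> ((0) + (1)*g) * ((0) + (-4)*b + (3)*d)" by (rule mult_nonneg_nonneg) (use b1 b2 b3 b4 b5 b6 b7 k222 k225 k228 k255 c259 c261 in linarith)+
            have e267: "5 - (a*d + b*g) = (1/5)*((1) + (-1)*g) + (6/5)*((4) + (-3)*a + (-2)*g) + (1/5)*(((0) + (1)*a) * ((0) + (3)*b + (-2)*d)) + (3/5)*(((0) + (1)*a) * ((6) + (-1)*b + (-1)*d)) + (13/30)*(((0) + (1)*g) * ((6) + (-1)*b + (-1)*d)) + (1/30)*(((0) + (1)*g) * ((0) + (-1)*b + (1)*d)) + (2/15)*(((0) + (1)*g) * ((0) + (-4)*b + (3)*d))" by algebra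
            show ?thesis using b1 b2 b3 b4 b5 b6 b7 k222 k225 k228 k255 c259 c261 p262 p263 p264 p265 p266 e267 by argo
          next
            assume c268: "(b - (d - b)) + ((d - b)) \<le> 2"
            have p269: "0 \<le> ((0) + (1)*a) * ((0) + (3)*b + (-2)*d)" by (rule mult_nonneg_nonneg) (use b1 b2 b3 b4 b5 b6 b7 k222 k225 k228 k255 c259 c268 in linarith)+
            have p270: "0 \<le> ((0) + (1)*a) * ((2) + (-1)*b)" by (rule mult_nonneg_nonneg) (use b1 b2 b3 b4 b5 b6 b7 k222 k225 k228 k255 c259 c268 in linarith)+
            have p271: "0 \<le> ((0) + (1)*g) * ((2) + (-1)*b)" by (rule mult_nonneg_nonneg) (use b1 b2 b3 b4 b5 b6 b7 k222 k225 k228 k255 c259 c268 in linarith)+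
            have e272: "5 - (a*d + b*g) = (3)*((1) + (-1)*a) + (2)*((1) + (-1)*g) + (1/2)*(((0) + (1)*a) * ((0) + (3)*b + (-2)*d)) + (3/2)*(((0) + (1)*a) * ((2) + (-1)*b)) + (1)*(((0) + (1)*g) * ((2) + (-1)*b))" by algebra
            show ?thesis using b1 b2 b3 b4 b5 b6 b7 k222 k225 k228 k255 c259 c268 p269 p270 p271 e272 by argo
          qed
        qed
      next
        case False
        note k273 = False
        have q274: "par ((a + (g + a)), (b - (d - b)), ((g + a)), ((d - b))) = (((a + (g + a))), ((b - (d - b))), (((g + a)) + (a + (g + a))), (((d - b)) - (b - (d - b))))" using k273 by (simp add: par_def)
        have v275: "UT (((a + (g + a))), ((b - (d - b))), (((g + a)) + (a + (g + a))), (((d - b)) - (b - (d - b))))" using u3 q223 q226 q274 by simp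
        show ?thesis
        proof (cases "(((d - b)) - (b - (d - b))) \<le> ((b - (d - b)))")
          case True
          note k276 = True
          have q277: "par (((a + (g + a))), ((b - (d - b))), (((g + a)) + (a + (g + a))), (((d - b)) - (b - (d - b)))) = ((((a + (g + a))) + (((g + a)) + (a + (g + a)))), (((b - (d - b))) - (((d - b)) - (b - (d - b)))), ((((g + a)) + (a + (g + a)))), ((((d - b)) - (b - (d - b)))))" using k276 by (simp add: par_def)
          have v278: "UT ((((a + (g + a))) + (((g + a)) + (a + (g + a)))), (((b - (d - b))) - (((d - b)) - (b - (d - b)))), ((((g + a)) + (a + (g + a)))), ((((d - b)) - (b - (d - b)))))" using u4 q223 q226 q274 q277 by simp
          have h279: "a + g \<le> 1 \<or> b + d \<le> 6" using u0 by (simp add: UT_def U_def)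
          have c280: "b + d \<le> 6"
          proof (rule disjE[OF h279])
            assume "a + g \<le> 1" then show ?thesis using b1 b2 b3 b4 b5 b6 b7 k222 k225 k273 k276 by linarith
          next
            assume "b + d \<le> 6" then show ?thesis .
          qed
          have h281: "(a + (g + a)) + ((g + a)) \<le> 4 \<or> (b - (d - b)) + ((d - b)) \<le> 2" using v227 by (simp add: UT_def U_def)
          show ?thesis
          proof (rule disjE[OF h281])
            assume c282: "(a + (g + a)) + ((g + a)) \<le> 4"
            have p283: "0 \<le> ((0) + (1)*a) * ((0) + (5)*b + (-3)*d)" by (rule mult_nonneg_nonneg) (use b1 b2 b3 b4 b5 b6 b7 k222 k225 k273 k276 c280 c282 in linarith)+
            have p284: "0 \<le> ((0) + (1)*a) * ((6) + (-1)*b + (-1)*d)" by (rule mult_nonneg_nonneg) (use b1 b2 b3 b4 b5 b6 b7 k222 k225 k273 k276 c280 c282 in linarith)+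
            have p285: "0 \<le> ((0) + (1)*g) * ((6) + (-1)*b + (-1)*d)" by (rule mult_nonneg_nonneg) (use b1 b2 b3 b4 b5 b6 b7 k222 k225 k273 k276 c280 c282 in linarith)+
            have p286: "0 \<le> ((0) + (1)*g) * ((0) + (-1)*b + (1)*d)" by (rule mult_nonneg_nonneg) (use b1 b2 b3 b4 b5 b6 b7 k222 k225 k273 k276 c280 c282 in linarith)+
            have p287: "0 \<le> ((0) + (1)*g) * ((0) + (-3)*b + (2)*d)" by (rule mult_nonneg_nonneg) (use b1 b2 b3 b4 b5 b6 b7 k222 k225 k273 k276 c280 c282 in linarith)+
            have e288: "5 - (a*d + b*g) = (5/4)*((4) + (-3)*a + (-2)*g) + (1/8)*(((0) + (1)*a) * ((0) + (5)*b + (-3)*d)) + (5/8)*(((0) + (1)*a) * ((6) + (-1)*b + (-1)*d)) + (5/12)*(((0) + (1)*g) * ((6) + (-1)*b + (-1)*d)) + (1/12)*(((0) + (1)*g) * ((0) + (-1)*b + (1)*d)) + (1/6)*(((0) + (1)*g) * ((0) + (-3)*b + (2)*d))" by algebra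
            show ?thesis using b1 b2 b3 b4 b5 b6 b7 k222 k225 k273 k276 c280 c282 p283 p284 p285 p286 p287 e288 by argo
          next
            assume c289: "(b - (d - b)) + ((d - b)) \<le> 2"
            have h290: "((a + (g + a))) + (((g + a)) + (a + (g + a))) \<le> 6 \<or> ((b - (d - b))) + (((d - b)) - (b - (d - b))) \<le> 1" using v275 by (simp add: UT_def U_def)
            show ?thesis
            proof (rule disjE[OF h290])
              assume c291: "((a + (g + a))) + (((g + a)) + (a + (g + a))) \<le> 6"
              have p292: "0 \<le> ((0) + (1)*a) * ((0) + (5)*b + (-3)*d)" by (rule mult_nonneg_nonneg) (use b1 b2 b3 b4 b5 b6 b7 k222 k225 k273 k276 c280 c289 c291 in linarith)+
              have p293: "0 \<le> ((0) + (1)*a) * ((2) + (-1)*b)" by (rule mult_nonneg_nonneg) (use b1 b2 b3 b4 b5 b6 b7 k222 k225 k273 k276 c280 c289 c291 in linarith)+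
              have p294: "0 \<le> ((0) + (1)*g) * ((0) + (1)*d)" by (rule mult_nonneg_nonneg) (use b1 b2 b3 b4 b5 b6 b7 k222 k225 k273 k276 c280 c289 c291 in linarith)+
              have p295: "0 \<le> ((0) + (1)*g) * ((6) + (-1)*b + (-1)*d)" by (rule mult_nonneg_nonneg) (use b1 b2 b3 b4 b5 b6 b7 k222 k225 k273 k276 c280 c289 c291 in linarith)+
              have p296: "0 \<le> ((0) + (1)*g) * ((2) + (-1)*b)" by (rule mult_nonneg_nonneg) (use b1 b2 b3 b4 b5 b6 b7 k222 k225 k273 k276 c280 c289 c291 in linarith)+
              have e297: "5 - (a*d + b*g) = (1)*((1) + (-1)*g) + (2/3)*((6) + (-5)*a + (-3)*g) + (1/3)*(((0) + (1)*a) * ((0) + (5)*b + (-3)*d)) + (5/3)*(((0) + (1)*a) * ((2) + (-1)*b)) + (1/4)*(((0) + (1)*g) * ((0) + (1)*d)) + (1/4)*(((0) + (1)*g) * ((6) + (-1)*b + (-1)*d)) + (3/4)*(((0) + (1)*g) * ((2) + (-1)*b))" by algebra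
              show ?thesis using b1 b2 b3 b4 b5 b6 b7 k222 k225 k273 k276 c280 c289 c291 p292 p293 p294 p295 p296 e297 by argo
            next
              assume c298: "((b - (d - b))) + (((d - b)) - (b - (d - b))) \<le> 1"
              have p299: "0 \<le> ((0) + (1)*a) * ((2) + (-1)*b)" by (rule mult_nonneg_nonneg) (use b1 b2 b3 b4 b5 b6 b7 k222 k225 k273 k276 c280 c289 c298 in linarith)+
              have p300: "0 \<le> ((0) + (1)*a) * ((1) + (1)*b + (-1)*d)" by (rule mult_nonneg_nonneg) (use b1 b2 b3 b4 b5 b6 b7 k222 k225 k273 k276 c280 c289 c298 in linarith)+
              have p301: "0 \<le> ((0) + (1)*g) * ((2) + (-1)*b)" by (rule mult_nonneg_nonneg) (use b1 b2 b3 b4 b5 b6 b7 k222 k225 k273 k276 c280 c289 c298 in linarith)+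
              have e302: "5 - (a*d + b*g) = (3)*((1) + (-1)*a) + (2)*((1) + (-1)*g) + (1)*(((0) + (1)*a) * ((2) + (-1)*b)) + (1)*(((0) + (1)*a) * ((1) + (1)*b + (-1)*d)) + (1)*(((0) + (1)*g) * ((2) + (-1)*b))" by algebra
              show ?thesis using b1 b2 b3 b4 b5 b6 b7 k222 k225 k273 k276 c280 c289 c298 p299 p300 p301 e302 by argo
            qed
          qed
        next
          case False
          note k303 = False
          have q304: "par (((a + (g + a))), ((b - (d - b))), (((g + a)) + (a + (g + a))), (((d - b)) - (b - (d - b)))) = ((((a + (g + a)))), (((b - (d - b)))), ((((g + a)) + (a + (g + a))) + ((a + (g + a)))), ((((d - b)) - (b - (d - b))) - ((b - (d - b)))))" using k303 by (simp add: par_def)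
          have v305: "UT ((((a + (g + a)))), (((b - (d - b)))), ((((g + a)) + (a + (g + a))) + ((a + (g + a)))), ((((d - b)) - (b - (d - b))) - ((b - (d - b)))))" using u4 q223 q226 q274 q304 by simp
          have h306: "a + g \<le> 1 \<or> b + d \<le> 6" using u0 by (simp add: UT_def U_def)
          have c307: "b + d \<le> 6"
          proof (rule disjE[OF h306])
            assume "a + g \<le> 1" then show ?thesis using b1 b2 b3 b4 b5 b6 b7 k222 k225 k273 k303 by linarith
          next
            assume "b + d \<le> 6" then show ?thesis .
          qed
          have h308: "(a + (g + a)) + ((g + a)) \<le> 4 \<or> (b - (d - b)) + ((d - b)) \<le> 2" using v227 by (simp add: UT_def U_def)
          show ?thesis
          proof (rule disjE[OF h308])
            assume c309: "(a + (g + a)) + ((g + a)) \<le> 4"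
            have p310: "0 \<le> ((0) + (1)*a) * ((6) + (-1)*b + (-1)*d)" by (rule mult_nonneg_nonneg) (use b1 b2 b3 b4 b5 b6 b7 k222 k225 k273 k303 c307 c309 in linarith)+
            have p311: "0 \<le> ((1) + (-1)*a) * ((0) + (-1)*b + (1)*d)" by (rule mult_nonneg_nonneg) (use b1 b2 b3 b4 b5 b6 b7 k222 k225 k273 k303 c307 c309 in linarith)+
            have p312: "0 \<le> ((0) + (1)*g) * ((6) + (-1)*b + (-1)*d)" by (rule mult_nonneg_nonneg) (use b1 b2 b3 b4 b5 b6 b7 k222 k225 k273 k303 c307 c309 in linarith)+
            have p313: "0 \<le> ((1) + (-1)*g) * ((0) + (2)*b + (-1)*d)" by (rule mult_nonneg_nonneg) (use b1 b2 b3 b4 b5 b6 b7 k222 k225 k273 k303 c307 c309 in linarith)+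
            have e314: "5 - (a*d + b*g) = (1/6)*((6) + (-1)*b + (-1)*d) + (1)*((4) + (-3)*a + (-2)*g) + (1/2)*(((0) + (1)*a) * ((6) + (-1)*b + (-1)*d)) + (1/2)*(((1) + (-1)*a) * ((0) + (-1)*b + (1)*d)) + (1/3)*(((0) + (1)*g) * ((6) + (-1)*b + (-1)*d)) + (1/3)*(((1) + (-1)*g) * ((0) + (2)*b + (-1)*d))" by algebra
            show ?thesis using b1 b2 b3 b4 b5 b6 b7 k222 k225 k273 k303 c307 c309 p310 p311 p312 p313 e314 by argo
          next
            assume c315: "(b - (d - b)) + ((d - b)) \<le> 2"
            have h316: "((a + (g + a))) + (((g + a)) + (a + (g + a))) \<le> 6 \<or> ((b - (d - b))) + (((d - b)) - (b - (d - b))) \<le> 1" using v275 by (simp add: UT_def U_def)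
            show ?thesis
            proof (rule disjE[OF h316])
              assume c317: "((a + (g + a))) + (((g + a)) + (a + (g + a))) \<le> 6"
              have p318: "0 \<le> ((0) + (1)*a) * ((0) + (2)*b + (-1)*d)" by (rule mult_nonneg_nonneg) (use b1 b2 b3 b4 b5 b6 b7 k222 k225 k273 k303 c307 c315 c317 in linarith)+
              have p319: "0 \<le> ((0) + (1)*a) * ((6) + (-1)*b + (-1)*d)" by (rule mult_nonneg_nonneg) (use b1 b2 b3 b4 b5 b6 b7 k222 k225 k273 k303 c307 c315 c317 in linarith)+
              have p320: "0 \<le> ((0) + (1)*g) * ((0) + (1)*d)" by (rule mult_nonneg_nonneg) (use b1 b2 b3 b4 b5 b6 b7 k222 k225 k273 k303 c307 c315 c317 in linarith)+
              have p321: "0 \<le> ((0) + (1)*g) * ((6) + (-1)*b + (-1)*d)" by (rule mult_nonneg_nonneg) (use b1 b2 b3 b4 b5 b6 b7 k222 k225 k273 k303 c307 c315 c317 in linarith)+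
              have p322: "0 \<le> ((0) + (1)*g) * ((2) + (-1)*b)" by (rule mult_nonneg_nonneg) (use b1 b2 b3 b4 b5 b6 b7 k222 k225 k273 k303 c307 c315 c317 in linarith)+
              have e323: "5 - (a*d + b*g) = (1/5)*((1) + (-1)*g) + (4/5)*((6) + (-5)*a + (-3)*g) + (1/3)*(((0) + (1)*a) * ((0) + (2)*b + (-1)*d)) + (2/3)*(((0) + (1)*a) * ((6) + (-1)*b + (-1)*d)) + (3/20)*(((0) + (1)*g) * ((0) + (1)*d)) + (3/20)*(((0) + (1)*g) * ((6) + (-1)*b + (-1)*d)) + (17/20)*(((0) + (1)*g) * ((2) + (-1)*b))" by algebra
              show ?thesis using b1 b2 b3 b4 b5 b6 b7 k222 k225 k273 k303 c307 c315 c317 p318 p319 p320 p321 p322 e323 by argo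
            next
              assume c324: "((b - (d - b))) + (((d - b)) - (b - (d - b))) \<le> 1"
              have p325: "0 \<le> ((0) + (1)*a) * ((1) + (1)*b + (-1)*d)" by (rule mult_nonneg_nonneg) (use b1 b2 b3 b4 b5 b6 b7 k222 k225 k273 k303 c307 c315 c324 in linarith)+
              have p326: "0 \<le> ((0) + (1)*a) * ((0) + (-5)*b + (3)*d)" by (rule mult_nonneg_nonneg) (use b1 b2 b3 b4 b5 b6 b7 k222 k225 k273 k303 c307 c315 c324 in linarith)+
              have p327: "0 \<le> ((0) + (1)*g) * ((0) + (1)*d)" by (rule mult_nonneg_nonneg) (use b1 b2 b3 b4 b5 b6 b7 k222 k225 k273 k303 c307 c315 c324 in linarith)+
              have p328: "0 \<le> ((0) + (1)*g) * ((6) + (-1)*b + (-1)*d)" by (rule mult_nonneg_nonneg) (use b1 b2 b3 b4 b5 b6 b7 k222 k225 k273 k303 c307 c315 c324 in linarith)+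
              have p329: "0 \<le> ((0) + (1)*g) * ((2) + (-1)*b)" by (rule mult_nonneg_nonneg) (use b1 b2 b3 b4 b5 b6 b7 k222 k225 k273 k303 c307 c315 c324 in linarith)+
              have e330: "5 - (a*d + b*g) = (5/2)*((1) + (-1)*a) + (5/2)*((1) + (-1)*g) + (5/2)*(((0) + (1)*a) * ((1) + (1)*b + (-1)*d)) + (1/2)*(((0) + (1)*a) * ((0) + (-5)*b + (3)*d)) + (1/8)*(((0) + (1)*g) * ((0) + (1)*d)) + (1/8)*(((0) + (1)*g) * ((6) + (-1)*b + (-1)*d)) + (7/8)*(((0) + (1)*g) * ((2) + (-1)*b))" by algebra
              show ?thesis using b1 b2 b3 b4 b5 b6 b7 k222 k225 k273 k303 c307 c315 c324 p325 p326 p327 p328 p329 e330 by argo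
            qed
          qed
        qed
      qed
    next
      case False
      note k331 = False
      have q332: "par (a, b, (g + a), (d - b)) = (a, b, ((g + a) + a), ((d - b) - b))" using k331 by (simp add: par_def)
      have v333: "UT (a, b, ((g + a) + a), ((d - b) - b))" using u2 q223 q332 by simp
      show ?thesis
      proof (cases "((d - b) - b) \<le> b")
        case True
        note k334 = True
        have q335: "par (a, b, ((g + a) + a), ((d - b) - b)) = ((a + ((g + a) + a)), (b - ((d - b) - b)), (((g + a) + a)), (((d - b) - b)))" using k334 by (simp add: par_def)
        have v336: "UT ((a + ((g + a) + a)), (b - ((d - b) - b)), (((g + a) + a)), (((d - b) - b)))" using u3 q223 q332 q335 by simp
        show ?thesis
        proof (cases "(((d - b) - b)) \<le> (b - ((d - b) - b))")
          case True
          note k337 = True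
          have q338: "par ((a + ((g + a) + a)), (b - ((d - b) - b)), (((g + a) + a)), (((d - b) - b))) = (((a + ((g + a) + a)) + (((g + a) + a))), ((b - ((d - b) - b)) - (((d - b) - b))), ((((g + a) + a))), ((((d - b) - b))))" using k337 by (simp add: par_def)
          have v339: "UT (((a + ((g + a) + a)) + (((g + a) + a))), ((b - ((d - b) - b)) - (((d - b) - b))), ((((g + a) + a))), ((((d - b) - b))))" using u4 q223 q332 q335 q338 by simp
          have h340: "a + g \<le> 1 \<or> b + d \<le> 6" using u0 by (simp add: UT_def U_def)
          have c341: "b + d \<le> 6"
          proof (rule disjE[OF h340])
            assume "a + g \<le> 1" then show ?thesis using b1 b2 b3 b4 b5 b6 b7 k222 k331 k334 k337 by linarith
          next
            assume "b + d \<le> 6" then show ?thesis .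
          qed
          have h342: "a + (g + a) \<le> 2 \<or> b + (d - b) \<le> 4" using v224 by (simp add: UT_def U_def)
          show ?thesis
          proof (rule disjE[OF h342])
            assume c343: "a + (g + a) \<le> 2"
            have p344: "0 \<le> ((0) + (1)*a) * ((0) + (5)*b + (-2)*d)" by (rule mult_nonneg_nonneg) (use b1 b2 b3 b4 b5 b6 b7 k222 k331 k334 k337 c341 c343 in linarith)+
            have p345: "0 \<le> ((0) + (1)*a) * ((6) + (-1)*b + (-1)*d)" by (rule mult_nonneg_nonneg) (use b1 b2 b3 b4 b5 b6 b7 k222 k331 k334 k337 c341 c343 in linarith)+
            have p346: "0 \<le> ((0) + (1)*g) * ((6) + (-1)*b + (-1)*d)" by (rule mult_nonneg_nonneg) (use b1 b2 b3 b4 b5 b6 b7 k222 k331 k334 k337 c341 c343 in linarith)+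
            have p347: "0 \<le> ((0) + (1)*g) * ((0) + (-1)*b + (1)*d)" by (rule mult_nonneg_nonneg) (use b1 b2 b3 b4 b5 b6 b7 k222 k331 k334 k337 c341 c343 in linarith)+
            have p348: "0 \<le> ((0) + (1)*g) * ((0) + (-2)*b + (1)*d)" by (rule mult_nonneg_nonneg) (use b1 b2 b3 b4 b5 b6 b7 k222 k331 k334 k337 c341 c343 in linarith)+
            have e349: "5 - (a*d + b*g) = (5/7)*((1) + (-1)*g) + (15/7)*((2) + (-2)*a + (-1)*g) + (1/7)*(((0) + (1)*a) * ((0) + (5)*b + (-2)*d)) + (5/7)*(((0) + (1)*a) * ((6) + (-1)*b + (-1)*d)) + (10/21)*(((0) + (1)*g) * ((6) + (-1)*b + (-1)*d)) + (3/7)*(((0) + (1)*g) * ((0) + (-1)*b + (1)*d)) + (1/21)*(((0) + (1)*g) * ((0) + (-2)*b + (1)*d))" by algebra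
            show ?thesis using b1 b2 b3 b4 b5 b6 b7 k222 k331 k334 k337 c341 c343 p344 p345 p346 p347 p348 e349 by argo
          next
            assume c350: "b + (d - b) \<le> 4"
            have h351: "(a + ((g + a) + a)) + (((g + a) + a)) \<le> 6 \<or> (b - ((d - b) - b)) + (((d - b) - b)) \<le> 1" using v336 by (simp add: UT_def U_def)
            show ?thesis
            proof (rule disjE[OF h351])
              assume c352: "(a + ((g + a) + a)) + (((g + a) + a)) \<le> 6"
              have h353: "((a + ((g + a) + a)) + (((g + a) + a))) + ((((g + a) + a))) \<le> 6 \<or> ((b - ((d - b) - b)) - (((d - b) - b))) + ((((d - b) - b))) \<le> 1" using v339 by (simp add: UT_def U_def)
              show ?thesis
              proof (rule disjE[OF h353])
                assume c354: "((a + ((g + a) + a)) + (((g + a) + a))) + ((((g + a) + a))) \<le> 6"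
                have p355: "0 \<le> ((0) + (1)*a) * ((4) + (-1)*d)" by (rule mult_nonneg_nonneg) (use b1 b2 b3 b4 b5 b6 b7 k222 k331 k334 k337 c341 c350 c352 c354 in linarith)+
                have p356: "0 \<le> ((0) + (1)*g) * ((0) + (1)*d)" by (rule mult_nonneg_nonneg) (use b1 b2 b3 b4 b5 b6 b7 k222 k331 k334 k337 c341 c350 c352 c354 in linarith)+
                have p357: "0 \<le> ((0) + (1)*g) * ((6) + (-1)*b + (-1)*d)" by (rule mult_nonneg_nonneg) (use b1 b2 b3 b4 b5 b6 b7 k222 k331 k334 k337 c341 c350 c352 c354 in linarith)+
                have p358: "0 \<le> ((0) + (1)*g) * ((0) + (-1)*b + (1)*d)" by (rule mult_nonneg_nonneg) (use b1 b2 b3 b4 b5 b6 b7 k222 k331 k334 k337 c341 c350 c352 c354 in linarith)+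
                have e359: "5 - (a*d + b*g) = (11/7)*((1) + (-1)*g) + (4/7)*((6) + (-7)*a + (-3)*g) + (1)*(((0) + (1)*a) * ((4) + (-1)*d)) + (2/21)*(((0) + (1)*g) * ((0) + (1)*d)) + (23/42)*(((0) + (1)*g) * ((6) + (-1)*b + (-1)*d)) + (19/42)*(((0) + (1)*g) * ((0) + (-1)*b + (1)*d))" by algebra
                show ?thesis using b1 b2 b3 b4 b5 b6 b7 k222 k331 k334 k337 c341 c350 c352 c354 p355 p356 p357 p358 e359 by argo
              next
                assume c360: "((b - ((d - b) - b)) - (((d - b) - b))) + ((((d - b) - b))) \<le> 1"
                have p361: "0 \<le> ((0) + (1)*a) * ((4) + (-1)*d)" by (rule mult_nonneg_nonneg) (use b1 b2 b3 b4 b5 b6 b7 k222 k331 k334 k337 c341 c350 c352 c360 in linarith)+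
                have p362: "0 \<le> ((0) + (1)*g) * ((0) + (1)*d)" by (rule mult_nonneg_nonneg) (use b1 b2 b3 b4 b5 b6 b7 k222 k331 k334 k337 c341 c350 c352 c360 in linarith)+
                have p363: "0 \<le> ((0) + (1)*g) * ((6) + (-1)*b + (-1)*d)" by (rule mult_nonneg_nonneg) (use b1 b2 b3 b4 b5 b6 b7 k222 k331 k334 k337 c341 c350 c352 c360 in linarith)+
                have p364: "0 \<le> ((0) + (1)*g) * ((1) + (-3)*b + (1)*d)" by (rule mult_nonneg_nonneg) (use b1 b2 b3 b4 b5 b6 b7 k222 k331 k334 k337 c341 c350 c352 c360 in linarith)+
                have e365: "5 - (a*d + b*g) = (1/5)*((1) + (-1)*g) + (4/5)*((6) + (-5)*a + (-2)*g) + (1)*(((0) + (1)*a) * ((4) + (-1)*d)) + (1/85)*(((0) + (1)*g) * ((0) + (1)*d)) + (22/85)*(((0) + (1)*g) * ((6) + (-1)*b + (-1)*d)) + (21/85)*(((0) + (1)*g) * ((1) + (-3)*b + (1)*d))" by algebra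
                show ?thesis using b1 b2 b3 b4 b5 b6 b7 k222 k331 k334 k337 c341 c350 c352 c360 p361 p362 p363 p364 e365 by argo
              qed
            next
              assume c366: "(b - ((d - b) - b)) + (((d - b) - b)) \<le> 1"
              have p367: "0 \<le> ((0) + (1)*a) * ((0) + (5)*b + (-2)*d)" by (rule mult_nonneg_nonneg) (use b1 b2 b3 b4 b5 b6 b7 k222 k331 k334 k337 c341 c350 c366 in linarith)+
              have p368: "0 \<le> ((0) + (1)*a) * ((1) + (-1)*b)" by (rule mult_nonneg_nonneg) (use b1 b2 b3 b4 b5 b6 b7 k222 k331 k334 k337 c341 c350 c366 in linarith)+
              have p369: "0 \<le> ((0) + (1)*g) * ((0) + (1)*d)" by (rule mult_nonneg_nonneg) (use b1 b2 b3 b4 b5 b6 b7 k222 k331 k334 k337 c341 c350 c366 in linarith)+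
              have p370: "0 \<le> ((0) + (1)*g) * ((6) + (-1)*b + (-1)*d)" by (rule mult_nonneg_nonneg) (use b1 b2 b3 b4 b5 b6 b7 k222 k331 k334 k337 c341 c350 c366 in linarith)+
              have p371: "0 \<le> ((0) + (1)*g) * ((1) + (-1)*b)" by (rule mult_nonneg_nonneg) (use b1 b2 b3 b4 b5 b6 b7 k222 k331 k334 k337 c341 c350 c366 in linarith)+
              have e372: "5 - (a*d + b*g) = (5/2)*((1) + (-1)*a) + (5/2)*((1) + (-1)*g) + (1/2)*(((0) + (1)*a) * ((0) + (5)*b + (-2)*d)) + (5/2)*(((0) + (1)*a) * ((1) + (-1)*b)) + (3/10)*(((0) + (1)*g) * ((0) + (1)*d)) + (3/10)*(((0) + (1)*g) * ((6) + (-1)*b + (-1)*d)) + (7/10)*(((0) + (1)*g) * ((1) + (-1)*b))" by algebra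
              show ?thesis using b1 b2 b3 b4 b5 b6 b7 k222 k331 k334 k337 c341 c350 c366 p367 p368 p369 p370 p371 e372 by argo
            qed
          qed
        next
          case False
          note k373 = False
          have q374: "par ((a + ((g + a) + a)), (b - ((d - b) - b)), (((g + a) + a)), (((d - b) - b))) = (((a + ((g + a) + a))), ((b - ((d - b) - b))), ((((g + a) + a)) + (a + ((g + a) + a))), ((((d - b) - b)) - (b - ((d - b) - b))))" using k373 by (simp add: par_def)
          have v375: "UT (((a + ((g + a) + a))), ((b - ((d - b) - b))), ((((g + a) + a)) + (a + ((g + a) + a))), ((((d - b) - b)) - (b - ((d - b) - b))))" using u4 q223 q332 q335 q374 by simp
          have h376: "a + g \<le> 1 \<or> b + d \<le> 6" using u0 by (simp add: UT_def U_def)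
          have c377: "b + d \<le> 6"
          proof (rule disjE[OF h376])
            assume "a + g \<le> 1" then show ?thesis using b1 b2 b3 b4 b5 b6 b7 k222 k331 k334 k373 by linarith
          next
            assume "b + d \<le> 6" then show ?thesis .
          qed
          have h378: "a + (g + a) \<le> 2 \<or> b + (d - b) \<le> 4" using v224 by (simp add: UT_def U_def)
          show ?thesis
          proof (rule disjE[OF h378])
            assume c379: "a + (g + a) \<le> 2"
            have p380: "0 \<le> ((0) + (1)*a) * ((0) + (3)*b + (-1)*d)" by (rule mult_nonneg_nonneg) (use b1 b2 b3 b4 b5 b6 b7 k222 k331 k334 k373 c377 c379 in linarith)+
            have p381: "0 \<le> ((0) + (1)*a) * ((6) + (-1)*b + (-1)*d)" by (rule mult_nonneg_nonneg) (use b1 b2 b3 b4 b5 b6 b7 k222 k331 k334 k373 c377 c379 in linarith)+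
            have p382: "0 \<le> ((0) + (1)*g) * ((6) + (-1)*b + (-1)*d)" by (rule mult_nonneg_nonneg) (use b1 b2 b3 b4 b5 b6 b7 k222 k331 k334 k373 c377 c379 in linarith)+
            have p383: "0 \<le> ((0) + (1)*g) * ((0) + (-1)*b + (1)*d)" by (rule mult_nonneg_nonneg) (use b1 b2 b3 b4 b5 b6 b7 k222 k331 k334 k373 c377 c379 in linarith)+
            have p384: "0 \<le> ((0) + (1)*g) * ((0) + (-2)*b + (1)*d)" by (rule mult_nonneg_nonneg) (use b1 b2 b3 b4 b5 b6 b7 k222 k331 k334 k373 c377 c379 in linarith)+
            have e385: "5 - (a*d + b*g) = (1/2)*((1) + (-1)*g) + (9/4)*((2) + (-2)*a + (-1)*g) + (1/4)*(((0) + (1)*a) * ((0) + (3)*b + (-1)*d)) + (3/4)*(((0) + (1)*a) * ((6) + (-1)*b + (-1)*d)) + (11/24)*(((0) + (1)*g) * ((6) + (-1)*b + (-1)*d)) + (3/8)*(((0) + (1)*g) * ((0) + (-1)*b + (1)*d)) + (1/12)*(((0) + (1)*g) * ((0) + (-2)*b + (1)*d))" by algebra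
            show ?thesis using b1 b2 b3 b4 b5 b6 b7 k222 k331 k334 k373 c377 c379 p380 p381 p382 p383 p384 e385 by argo
          next
            assume c386: "b + (d - b) \<le> 4"
            have h387: "(a + ((g + a) + a)) + (((g + a) + a)) \<le> 6 \<or> (b - ((d - b) - b)) + (((d - b) - b)) \<le> 1" using v336 by (simp add: UT_def U_def)
            show ?thesis
            proof (rule disjE[OF h387])
              assume c388: "(a + ((g + a) + a)) + (((g + a) + a)) \<le> 6"
              have p389: "0 \<le> ((0) + (1)*a) * ((4) + (-1)*d)" by (rule mult_nonneg_nonneg) (use b1 b2 b3 b4 b5 b6 b7 k222 k331 k334 k373 c377 c386 c388 in linarith)+
              have p390: "0 \<le> ((0) + (1)*g) * ((6) + (-1)*b + (-1)*d)" by (rule mult_nonneg_nonneg) (use b1 b2 b3 b4 b5 b6 b7 k222 k331 k334 k373 c377 c386 c388 in linarith)+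
              have p391: "0 \<le> ((0) + (1)*g) * ((0) + (-2)*b + (1)*d)" by (rule mult_nonneg_nonneg) (use b1 b2 b3 b4 b5 b6 b7 k222 k331 k334 k373 c377 c386 c388 in linarith)+
              have p392: "0 \<le> ((0) + (1)*g) * ((0) + (-5)*b + (2)*d)" by (rule mult_nonneg_nonneg) (use b1 b2 b3 b4 b5 b6 b7 k222 k331 k334 k373 c377 c386 c388 in linarith)+
              have e393: "5 - (a*d + b*g) = (1/5)*((1) + (-1)*g) + (4/5)*((6) + (-5)*a + (-2)*g) + (1)*(((0) + (1)*a) * ((4) + (-1)*d)) + (3/10)*(((0) + (1)*g) * ((6) + (-1)*b + (-1)*d)) + (1/10)*(((0) + (1)*g) * ((0) + (-2)*b + (1)*d)) + (1/10)*(((0) + (1)*g) * ((0) + (-5)*b + (2)*d))" by algebra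
              show ?thesis using b1 b2 b3 b4 b5 b6 b7 k222 k331 k334 k373 c377 c386 c388 p389 p390 p391 p392 e393 by argo
            next
              assume c394: "(b - ((d - b) - b)) + (((d - b) - b)) \<le> 1"
              have p395: "0 \<le> ((0) + (1)*a) * ((0) + (3)*b + (-1)*d)" by (rule mult_nonneg_nonneg) (use b1 b2 b3 b4 b5 b6 b7 k222 k331 k334 k373 c377 c386 c394 in linarith)+
              have p396: "0 \<le> ((0) + (1)*a) * ((1) + (-1)*b)" by (rule mult_nonneg_nonneg) (use b1 b2 b3 b4 b5 b6 b7 k222 k331 k334 k373 c377 c386 c394 in linarith)+
              have p397: "0 \<le> ((0) + (1)*g) * ((0) + (1)*d)" by (rule mult_nonneg_nonneg) (use b1 b2 b3 b4 b5 b6 b7 k222 k331 k334 k373 c377 c386 c394 in linarith)+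
              have p398: "0 \<le> ((0) + (1)*g) * ((6) + (-1)*b + (-1)*d)" by (rule mult_nonneg_nonneg) (use b1 b2 b3 b4 b5 b6 b7 k222 k331 k334 k373 c377 c386 c394 in linarith)+
              have p399: "0 \<le> ((0) + (1)*g) * ((1) + (-1)*b)" by (rule mult_nonneg_nonneg) (use b1 b2 b3 b4 b5 b6 b7 k222 k331 k334 k373 c377 c386 c394 in linarith)+
              have e400: "5 - (a*d + b*g) = (3)*((1) + (-1)*a) + (2)*((1) + (-1)*g) + (1)*(((0) + (1)*a) * ((0) + (3)*b + (-1)*d)) + (3)*(((0) + (1)*a) * ((1) + (-1)*b)) + (1/5)*(((0) + (1)*g) * ((0) + (1)*d)) + (1/5)*(((0) + (1)*g) * ((6) + (-1)*b + (-1)*d)) + (4/5)*(((0) + (1)*g) * ((1) + (-1)*b))" by algebra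
              show ?thesis using b1 b2 b3 b4 b5 b6 b7 k222 k331 k334 k373 c377 c386 c394 p395 p396 p397 p398 p399 e400 by argo
            qed
          qed
        qed
      next
        case False
        note k401 = False
        have q402: "par (a, b, ((g + a) + a), ((d - b) - b)) = (a, b, (((g + a) + a) + a), (((d - b) - b) - b))" using k401 by (simp add: par_def)
        have v403: "UT (a, b, (((g + a) + a) + a), (((d - b) - b) - b))" using u3 q223 q332 q402 by simp
        show ?thesis
        proof (cases "(((d - b) - b) - b) \<le> b")
          case True
          note k404 = True
          have q405: "par (a, b, (((g + a) + a) + a), (((d - b) - b) - b)) = ((a + (((g + a) + a) + a)), (b - (((d - b) - b) - b)), ((((g + a) + a) + a)), ((((d - b) - b) - b)))" using k404 by (simp add: par_def)
          have v406: "UT ((a + (((g + a) + a) + a)), (b - (((d - b) - b) - b)), ((((g + a) + a) + a)), ((((d - b) - b) - b)))" using u4 q223 q332 q402 q405 by simp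
          have h407: "a + g \<le> 1 \<or> b + d \<le> 6" using u0 by (simp add: UT_def U_def)
          have c408: "b + d \<le> 6"
          proof (rule disjE[OF h407])
            assume "a + g \<le> 1" then show ?thesis using b1 b2 b3 b4 b5 b6 b7 k222 k331 k401 k404 by linarith
          next
            assume "b + d \<le> 6" then show ?thesis .
          qed
          have h409: "a + (g + a) \<le> 2 \<or> b + (d - b) \<le> 4" using v224 by (simp add: UT_def U_def)
          show ?thesis
          proof (rule disjE[OF h409])
            assume c410: "a + (g + a) \<le> 2"
            have p411: "0 \<le> ((0) + (1)*a) * ((0) + (4)*b + (-1)*d)" by (rule mult_nonneg_nonneg) (use b1 b2 b3 b4 b5 b6 b7 k222 k331 k401 k404 c408 c410 in linarith)+
            have p412: "0 \<le> ((0) + (1)*a) * ((6) + (-1)*b + (-1)*d)" by (rule mult_nonneg_nonneg) (use b1 b2 b3 b4 b5 b6 b7 k222 k331 k401 k404 c408 c410 in linarith)+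
            have p413: "0 \<le> ((0) + (1)*g) * ((6) + (-1)*b + (-1)*d)" by (rule mult_nonneg_nonneg) (use b1 b2 b3 b4 b5 b6 b7 k222 k331 k401 k404 c408 c410 in linarith)+
            have p414: "0 \<le> ((0) + (1)*g) * ((0) + (-1)*b + (1)*d)" by (rule mult_nonneg_nonneg) (use b1 b2 b3 b4 b5 b6 b7 k222 k331 k401 k404 c408 c410 in linarith)+
            have p415: "0 \<le> ((0) + (1)*g) * ((0) + (-2)*b + (1)*d)" by (rule mult_nonneg_nonneg) (use b1 b2 b3 b4 b5 b6 b7 k222 k331 k401 k404 c408 c410 in linarith)+
            have e416: "5 - (a*d + b*g) = (1/5)*((1) + (-1)*g) + (12/5)*((2) + (-2)*a + (-1)*g) + (1/5)*(((0) + (1)*a) * ((0) + (4)*b + (-1)*d)) + (4/5)*(((0) + (1)*a) * ((6) + (-1)*b + (-1)*d)) + (13/30)*(((0) + (1)*g) * ((6) + (-1)*b + (-1)*d)) + (3/10)*(((0) + (1)*g) * ((0) + (-1)*b + (1)*d)) + (2/15)*(((0) + (1)*g) * ((0) + (-2)*b + (1)*d))" by algebra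
            show ?thesis using b1 b2 b3 b4 b5 b6 b7 k222 k331 k401 k404 c408 c410 p411 p412 p413 p414 p415 e416 by argo
          next
            assume c417: "b + (d - b) \<le> 4"
            have h418: "(a + (((g + a) + a) + a)) + ((((g + a) + a) + a)) \<le> 6 \<or> (b - (((d - b) - b) - b)) + ((((d - b) - b) - b)) \<le> 1" using v406 by (simp add: UT_def U_def)
            show ?thesis
            proof (rule disjE[OF h418])
              assume c419: "(a + (((g + a) + a) + a)) + ((((g + a) + a) + a)) \<le> 6"
              have p420: "0 \<le> ((0) + (1)*a) * ((4) + (-1)*d)" by (rule mult_nonneg_nonneg) (use b1 b2 b3 b4 b5 b6 b7 k222 k331 k401 k404 c408 c417 c419 in linarith)+
              have p421: "0 \<le> ((0) + (1)*g) * ((6) + (-1)*b + (-1)*d)" by (rule mult_nonneg_nonneg) (use b1 b2 b3 b4 b5 b6 b7 k222 k331 k401 k404 c408 c417 c419 in linarith)+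
              have p422: "0 \<le> ((0) + (1)*g) * ((0) + (-1)*b + (1)*d)" by (rule mult_nonneg_nonneg) (use b1 b2 b3 b4 b5 b6 b7 k222 k331 k401 k404 c408 c417 c419 in linarith)+
              have p423: "0 \<le> ((0) + (1)*g) * ((0) + (-2)*b + (1)*d)" by (rule mult_nonneg_nonneg) (use b1 b2 b3 b4 b5 b6 b7 k222 k331 k401 k404 c408 c417 c419 in linarith)+
              have e424: "5 - (a*d + b*g) = (11/7)*((1) + (-1)*g) + (4/7)*((6) + (-7)*a + (-2)*g) + (1)*(((0) + (1)*a) * ((4) + (-1)*d)) + (19/42)*(((0) + (1)*g) * ((6) + (-1)*b + (-1)*d)) + (5/14)*(((0) + (1)*g) * ((0) + (-1)*b + (1)*d)) + (2/21)*(((0) + (1)*g) * ((0) + (-2)*b + (1)*d))" by algebra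
              show ?thesis using b1 b2 b3 b4 b5 b6 b7 k222 k331 k401 k404 c408 c417 c419 p420 p421 p422 p423 e424 by argo
            next
              assume c425: "(b - (((d - b) - b) - b)) + ((((d - b) - b) - b)) \<le> 1"
              have p426: "0 \<le> ((0) + (1)*a) * ((4) + (-1)*d)" by (rule mult_nonneg_nonneg) (use b1 b2 b3 b4 b5 b6 b7 k222 k331 k401 k404 c408 c417 c425 in linarith)+
              have p427: "0 \<le> ((0) + (1)*g) * ((1) + (-1)*b)" by (rule mult_nonneg_nonneg) (use b1 b2 b3 b4 b5 b6 b7 k222 k331 k401 k404 c408 c417 c425 in linarith)+
              have e428: "5 - (a*d + b*g) = (4)*((1) + (-1)*a) + (1)*((1) + (-1)*g) + (1)*(((0) + (1)*a) * ((4) + (-1)*d)) + (1)*(((0) + (1)*g) * ((1) + (-1)*b))" by algebra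
              show ?thesis using b1 b2 b3 b4 b5 b6 b7 k222 k331 k401 k404 c408 c417 c425 p426 p427 e428 by argo
            qed
          qed
        next
          case False
          note k429 = False
          have q430: "par (a, b, (((g + a) + a) + a), (((d - b) - b) - b)) = (a, b, ((((g + a) + a) + a) + a), ((((d - b) - b) - b) - b))" using k429 by (simp add: par_def)
          have v431: "UT (a, b, ((((g + a) + a) + a) + a), ((((d - b) - b) - b) - b))" using u4 q223 q332 q402 q430 by simp
          have h432: "a + g \<le> 1 \<or> b + d \<le> 6" using u0 by (simp add: UT_def U_def)
          have c433: "b + d \<le> 6"
          proof (rule disjE[OF h432])
            assume "a + g \<le> 1" then show ?thesis using b1 b2 b3 b4 b5 b6 b7 k222 k331 k401 k429 by linarith
          next
            assume "b + d \<le> 6" then show ?thesis .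
          qed
          have h434: "a + (g + a) \<le> 2 \<or> b + (d - b) \<le> 4" using v224 by (simp add: UT_def U_def)
          show ?thesis
          proof (rule disjE[OF h434])
            assume c435: "a + (g + a) \<le> 2"
            have h436: "a + ((g + a) + a) \<le> 2 \<or> b + ((d - b) - b) \<le> 4" using v333 by (simp add: UT_def U_def)
            show ?thesis
            proof (rule disjE[OF h436])
              assume c437: "a + ((g + a) + a) \<le> 2"
              have p438: "0 \<le> ((0) + (1)*a) * ((0) + (1)*b)" by (rule mult_nonneg_nonneg) (use b1 b2 b3 b4 b5 b6 b7 k222 k331 k401 k429 c433 c435 c437 in linarith)+
              have p439: "0 \<le> ((0) + (1)*a) * ((6) + (-1)*b + (-1)*d)" by (rule mult_nonneg_nonneg) (use b1 b2 b3 b4 b5 b6 b7 k222 k331 k401 k429 c433 c435 c437 in linarith)+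
              have p440: "0 \<le> ((0) + (1)*g) * ((6) + (-1)*b + (-1)*d)" by (rule mult_nonneg_nonneg) (use b1 b2 b3 b4 b5 b6 b7 k222 k331 k401 k429 c433 c435 c437 in linarith)+
              have p441: "0 \<le> ((0) + (1)*g) * ((0) + (-1)*b + (1)*d)" by (rule mult_nonneg_nonneg) (use b1 b2 b3 b4 b5 b6 b7 k222 k331 k401 k429 c433 c435 c437 in linarith)+
              have e442: "5 - (a*d + b*g) = (1)*((1) + (-1)*g) + (2)*((2) + (-3)*a + (-1)*g) + (1)*(((0) + (1)*a) * ((0) + (1)*b)) + (1)*(((0) + (1)*a) * ((6) + (-1)*b + (-1)*d)) + (1/2)*(((0) + (1)*g) * ((6) + (-1)*b + (-1)*d)) + (1/2)*(((0) + (1)*g) * ((0) + (-1)*b + (1)*d))" by algebra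
              show ?thesis using b1 b2 b3 b4 b5 b6 b7 k222 k331 k401 k429 c433 c435 c437 p438 p439 p440 p441 e442 by argo
            next
              assume c443: "b + ((d - b) - b) \<le> 4"
              have p444: "0 \<le> ((0) + (1)*a) * ((6) + (-1)*b + (-1)*d)" by (rule mult_nonneg_nonneg) (use b1 b2 b3 b4 b5 b6 b7 k222 k331 k401 k429 c433 c435 c443 in linarith)+
              have p445: "0 \<le> ((0) + (1)*a) * ((4) + (1)*b + (-1)*d)" by (rule mult_nonneg_nonneg) (use b1 b2 b3 b4 b5 b6 b7 k222 k331 k401 k429 c433 c435 c443 in linarith)+
              have p446: "0 \<le> ((0) + (1)*g) * ((6) + (-1)*b + (-1)*d)" by (rule mult_nonneg_nonneg) (use b1 b2 b3 b4 b5 b6 b7 k222 k331 k401 k429 c433 c435 c443 in linarith)+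
              have p447: "0 \<le> ((0) + (1)*g) * ((0) + (-1)*b + (1)*d)" by (rule mult_nonneg_nonneg) (use b1 b2 b3 b4 b5 b6 b7 k222 k331 k401 k429 c433 c435 c443 in linarith)+
              have p448: "0 \<le> ((0) + (1)*g) * ((0) + (-2)*b + (1)*d)" by (rule mult_nonneg_nonneg) (use b1 b2 b3 b4 b5 b6 b7 k222 k331 k401 k429 c433 c435 c443 in linarith)+
              have e449: "5 - (a*d + b*g) = (5/2)*((2) + (-2)*a + (-1)*g) + (1/2)*(((0) + (1)*a) * ((6) + (-1)*b + (-1)*d)) + (1/2)*(((0) + (1)*a) * ((4) + (1)*b + (-1)*d)) + (5/12)*(((0) + (1)*g) * ((6) + (-1)*b + (-1)*d)) + (1/4)*(((0) + (1)*g) * ((0) + (-1)*b + (1)*d)) + (1/6)*(((0) + (1)*g) * ((0) + (-2)*b + (1)*d))" by algebra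
              show ?thesis using b1 b2 b3 b4 b5 b6 b7 k222 k331 k401 k429 c433 c435 c443 p444 p445 p446 p447 p448 e449 by argo
            qed
          next
            assume c450: "b + (d - b) \<le> 4"
            have p451: "0 \<le> ((0) + (1)*a) * ((4) + (-1)*d)" by (rule mult_nonneg_nonneg) (use b1 b2 b3 b4 b5 b6 b7 k222 k331 k401 k429 c433 c450 in linarith)+
            have p452: "0 \<le> ((0) + (1)*g) * ((4) + (-1)*d)" by (rule mult_nonneg_nonneg) (use b1 b2 b3 b4 b5 b6 b7 k222 k331 k401 k429 c433 c450 in linarith)+
            have p453: "0 \<le> ((0) + (1)*g) * ((0) + (-4)*b + (1)*d)" by (rule mult_nonneg_nonneg) (use b1 b2 b3 b4 b5 b6 b7 k222 k331 k401 k429 c433 c450 in linarith)+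
            have e454: "5 - (a*d + b*g) = (4)*((1) + (-1)*a) + (1)*((1) + (-1)*g) + (1)*(((0) + (1)*a) * ((4) + (-1)*d)) + (1/4)*(((0) + (1)*g) * ((4) + (-1)*d)) + (1/4)*(((0) + (1)*g) * ((0) + (-4)*b + (1)*d))" by algebra
            show ?thesis using b1 b2 b3 b4 b5 b6 b7 k222 k331 k401 k429 c433 c450 p451 p452 p453 e454 by argo
          qed
        qed
      qed
    qed
  qed
qed

definition F1 :: "(real \<times> real) set" where "F1 = {(1,6),(2,4),(3,3),(4,2),(6,1)}"

definition vb :: "(real \<times> real) set \<Rightarrow> real \<Rightarrow> (real \<times> real) \<times> (real \<times> real) \<Rightarrow> bool" where
  "vb L D B = (case B of (l,r) \<Rightarrow> l \<in> L \<and> r \<in> L \<and> \<bar>det2 l r\<bar> = D \<and> fst l \<le> 0 \<and> 0 \<le> fst r \<and> 0 \<le> snd l \<and> 0 \<le> snd r)"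

definition vpar :: "(real \<times> real) \<times> (real \<times> real) \<Rightarrow> (real \<times> real) \<times> (real \<times> real)" where
  "vpar B = (case B of (l,r) \<Rightarrow> if snd r \<le> snd l then (psub l r, r) else (l, psub r l))"

definition coords :: "(real \<times> real) \<times> (real \<times> real) \<Rightarrow> real \<times> real \<times> real \<times> real" where
  "coords B = (case B of (l,r) \<Rightarrow> (- fst l, snd l, fst r, snd r))"

lemma vb_par: assumes "vb (lattice u v) D B" shows "vb (lattice u v) D (vpar B)"
proof -
  obtain l r where B: "B = (l,r)" by (cases B)
  have l: "l \<in> lattice u v" and r: "r \<in> lattice u v" and d: "\<bar>det2 l r\<bar> = D"
    and s: "fst l \<le> 0" "0 \<le> fst r" "0 \<le> snd l" "0 \<le> snd r" using assms B by (auto simp: vb_def)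
  show ?thesis
  proof (cases "snd r \<le> snd l")
    case True
    have "det2 (psub l r) r = det2 l r" by (simp add: det2_def psub_def algebra_simps)
    then show ?thesis using True B l r d s lat_sub[OF l r] by (simp add: vb_def vpar_def psub_def)
  next
    case False
    have "det2 l (psub r l) = det2 l r" by (simp add: det2_def psub_def algebra_simps)
    then show ?thesis using False B l r d s lat_sub[OF r l] by (simp add: vb_def vpar_def psub_def)
  qed
qed

lemma coords_par: "coords (vpar B) = par (coords B)"
  by (cases B) (auto simp: coords_def vpar_def par_def psub_def)

lemma vb_U:
  assumes D: "det2 u v \<noteq> 0" and P: "piercing F1 (lattice u v)" and B: "vb (lattice u v) \<bar>det2 u v\<bar> B"
  shows "UT (coords B)"
proof -
  obtain l r where Bd: "B = (l,r)" by (cases B)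
  have l: "l \<in> lattice u v" and r: "r \<in> lattice u v" and d: "\<bar>det2 l r\<bar> = \<bar>det2 u v\<bar>"
    and s: "fst l \<le> 0" "0 \<le> fst r" "0 \<le> snd l" "0 \<le> snd r" using B Bd by (auto simp: vb_def)
  have box: "\<not> (fst r - fst l > a \<and> snd l + snd r > b)" if ab: "(a,b) \<in> F1" for a b
  proof
    assume "fst r - fst l > a \<and> snd l + snd r > b"
    then obtain t where t: "\<forall>p\<in>lattice u v. p \<notin> translate_rect (a,b) t"
      using fail_lemma[OF D l r d s] by blast
    from P ab have "\<exists>p\<in>lattice u v. p \<in> translate_rect (a,b) t" unfolding piercing_def by blast
    with t show False by blast
  qed
  have "U (- fst l + fst r) (snd l + snd r)"
    unfolding U_def using box[of 1 6] box[of 2 4] box[of 3 3] box[of 4 2] box[of 6 1]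
    by (simp add: F1_def) linarith
  then show ?thesis by (cases r) (simp add: Bd UT_def coords_def)
qed

lemma vb_detval:
  assumes "vb L D B" "coords B = (a,b,g,d)"
  shows "D = a*d + b*g" "0 \<le> a" "0 \<le> b" "0 \<le> g" "0 \<le> d"
proof -
  obtain l r where Bd: "B = (l,r)" by (cases B)
  have e: "a = - fst l" "b = snd l" "g = fst r" "d = snd r" using assms(2) Bd by (auto simp: coords_def)
  have dd: "\<bar>det2 l r\<bar> = D" and s: "fst l \<le> 0" "0 \<le> fst r" "0 \<le> snd l" "0 \<le> snd r"
    using assms(1) Bd by (auto simp: vb_def)
  show nn: "0 \<le> a" "0 \<le> b" "0 \<le> g" "0 \<le> d" using e s by auto
  have "det2 l r = - (a*d + b*g)" using e by (simp add: det2_def)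
  moreover have "a*d + b*g \<ge> 0" using nn by simp
  ultimately show "D = a*d + b*g" using dd by simp
qed

lemma anchor_bound:
  assumes D: "det2 u v \<noteq> 0" and P: "piercing F1 (lattice u v)"
    and B: "vb (lattice u v) \<bar>det2 u v\<bar> B" and c: "coords B = (a,b,g,d)"
    and a1: "a \<le> 1" and g1: "g \<le> 1" and ag: "1 < a + g"
  shows "\<bar>det2 u v\<bar> \<le> 5"
proof -
  have B1: "vb (lattice u v) \<bar>det2 u v\<bar> (vpar B)" using vb_par[OF B] .
  have B2: "vb (lattice u v) \<bar>det2 u v\<bar> (vpar (vpar B))" using vb_par[OF B1] .
  have B3: "vb (lattice u v) \<bar>det2 u v\<bar> (vpar (vpar (vpar B)))" using vb_par[OF B2] .
  have B4: "vb (lattice u v) \<bar>det2 u v\<bar> (vpar (vpar (vpar (vpar B))))" using vb_par[OF B3] .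
  have u0: "UT (a,b,g,d)" using vb_U[OF D P B] c by simp
  have u1: "UT (par (a,b,g,d))" using vb_U[OF D P B1] c by (simp add: coords_par)
  have u2: "UT (par (par (a,b,g,d)))" using vb_U[OF D P B2] c by (simp add: coords_par)
  have u3: "UT (par (par (par (a,b,g,d))))" using vb_U[OF D P B3] c by (simp add: coords_par)
  have u4: "UT (par (par (par (par (a,b,g,d)))))" using vb_U[OF D P B4] c by (simp add: coords_par)
  note v = vb_detval[OF B c]
  have "a*d + b*g \<le> 5" using chain_real[OF v(2) a1 v(4) g1 v(3) v(5) ag u0 u1 u2 u3 u4] .
  then show ?thesis using v(1) by simp
qed

lemma det2_lin1: "det2 (of_int i * fst u + of_int j * fst v, of_int i * snd u + of_int j * snd v) v = of_int i * det2 u v"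
  by (simp add: det2_def algebra_simps)
lemma det2_lin2: "det2 u (of_int i * fst u + of_int j * fst v, of_int i * snd u + of_int j * snd v) = of_int j * det2 u v"
  by (simp add: det2_def algebra_simps)

lemma det2_bound:
  assumes "\<bar>fst z\<bar> \<le> R" "\<bar>snd z\<bar> \<le> R"
  shows "\<bar>det2 z w\<bar> \<le> R * (\<bar>fst w\<bar> + \<bar>snd w\<bar>)" "\<bar>det2 w z\<bar> \<le> R * (\<bar>fst w\<bar> + \<bar>snd w\<bar>)"
proof -
  have a1: "\<bar>fst z * snd w\<bar> \<le> R * \<bar>snd w\<bar>" using assms(1) by (simp add: abs_mult mult_right_mono)
  have a2: "\<bar>snd z * fst w\<bar> \<le> R * \<bar>fst w\<bar>" using assms(2) by (simp add: abs_mult mult_right_mono)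
  have a3: "\<bar>fst w * snd z\<bar> \<le> R * \<bar>fst w\<bar>" using a2 by (simp add: mult.commute)
  have a4: "\<bar>snd w * fst z\<bar> \<le> R * \<bar>snd w\<bar>" using a1 by (simp add: mult.commute)
  show "\<bar>det2 z w\<bar> \<le> R * (\<bar>fst w\<bar> + \<bar>snd w\<bar>)" unfolding det2_def using a1 a2 by (simp add: algebra_simps abs_triangle_ineq4 order_trans[OF abs_triangle_ineq4])
  show "\<bar>det2 w z\<bar> \<le> R * (\<bar>fst w\<bar> + \<bar>snd w\<bar>)" unfolding det2_def using a3 a4 by (simp add: algebra_simps order_trans[OF abs_triangle_ineq4])
qed

lemma lat_finite:
  assumes D: "det2 u v \<noteq> 0"
  shows "finite {z \<in> lattice u v. \<bar>fst z\<bar> \<le> R \<and> \<bar>snd z\<bar> \<le> R}"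
proof -
  define K where "K = max (R * (\<bar>fst v\<bar> + \<bar>snd v\<bar>)) (R * (\<bar>fst u\<bar> + \<bar>snd u\<bar>)) / \<bar>det2 u v\<bar>"
  define M where "M = \<lceil>K\<rceil>"
  define f where "f = (\<lambda>(i::int,j::int). (of_int i * fst u + of_int j * fst v, of_int i * snd u + of_int j * snd v))"
  have Dp: "\<bar>det2 u v\<bar> > 0" using D by simp
  have "{z \<in> lattice u v. \<bar>fst z\<bar> \<le> R \<and> \<bar>snd z\<bar> \<le> R} \<subseteq> f ` ({-M..M} \<times> {-M..M})"
  proof
    fix z assume z: "z \<in> {z \<in> lattice u v. \<bar>fst z\<bar> \<le> R \<and> \<bar>snd z\<bar> \<le> R}"
    then obtain i j :: int where zi: "z = (of_int i * fst u + of_int j * fst v, of_int i * snd u + of_int j * snd v)"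
      using lat_mem by blast
    have b1: "\<bar>of_int i * det2 u v\<bar> \<le> R * (\<bar>fst v\<bar> + \<bar>snd v\<bar>)"
      using det2_bound(1)[of z R v] z zi det2_lin1 by simp
    have b2: "\<bar>of_int j * det2 u v\<bar> \<le> R * (\<bar>fst u\<bar> + \<bar>snd u\<bar>)"
      using det2_bound(2)[of z R u] z zi det2_lin2 by simp
    have "\<bar>of_int i\<bar> * \<bar>det2 u v\<bar> \<le> K * \<bar>det2 u v\<bar>" using b1 Dp unfolding K_def by (simp add: abs_mult le_max_iff_disj)
    then have i1: "\<bar>of_int i\<bar> \<le> K" using Dp by simp
    have "\<bar>of_int j\<bar> * \<bar>det2 u v\<bar> \<le> K * \<bar>det2 u v\<bar>" using b2 Dp unfolding K_def by (simp add: abs_mult le_max_iff_disj)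
    then have j1: "\<bar>of_int j\<bar> \<le> K" using Dp by simp
    have "real_of_int \<bar>i\<bar> \<le> real_of_int M" using i1 le_of_int_ceiling[of K] unfolding M_def by linarith
    then have ib: "\<bar>i\<bar> \<le> M" by linarith
    have "real_of_int \<bar>j\<bar> \<le> real_of_int M" using j1 le_of_int_ceiling[of K] unfolding M_def by linarith
    then have jb: "\<bar>j\<bar> \<le> M" by linarith
    have "(i,j) \<in> {-M..M} \<times> {-M..M}" using ib jb by auto
    moreover have "z = f (i,j)" using zi by (simp add: f_def)
    ultimately show "z \<in> f ` ({-M..M} \<times> {-M..M})" by blast
  qed
  then show ?thesis by (rule finite_subset) simp
qed

lemma exists_z1:
  assumes D: "det2 u v \<noteq> 0" and P: "piercing F1 (lattice u v)"
  shows "\<exists>z\<in>lattice u v. 0 < fst z \<and> fst z \<le> 1 \<and> \<bar>snd z\<bar> \<le> 3"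
proof -
  define S where "S = {z \<in> lattice u v. \<bar>fst z\<bar> \<le> 3 \<and> \<bar>snd z\<bar> \<le> 3} \<inter> {z. 1 < fst z}"
  have fS: "finite S" unfolding S_def using lat_finite[OF D, of 3] by simp
  define e where "e = (if S = {} then 1/2 else min (1/2) ((Min (fst ` S) - 1) / 2))"
  have e0: "0 < e" "e \<le> 1/2"
  proof -
    show "0 < e"
    proof (cases "S = {}")
      case True then show ?thesis by (simp add: e_def)
    next
      case False
      have "Min (fst ` S) \<in> fst ` S" using False fS by simp
      then have "Min (fst ` S) > 1" unfolding S_def by auto
      then show ?thesis using False by (simp add: e_def)
    qed
    show "e \<le> 1/2" unfolding e_def using min.cobounded1[of "1/2::real"] by auto
  qed
  have eS: "e < fst z - 1" if "z \<in> S" for z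
  proof -
    have ne: "S \<noteq> {}" using that by blast
    have "Min (fst ` S) \<le> fst z" using that fS by simp
    moreover have "Min (fst ` S) > 1"
    proof -
      have "Min (fst ` S) \<in> fst ` S" using ne fS by simp
      then show ?thesis unfolding S_def by auto
    qed
    moreover have "min (1/2) ((Min (fst ` S) - 1) / 2) \<le> (Min (fst ` S) - 1) / 2" by (rule min.cobounded2)
    ultimately show ?thesis using ne unfolding e_def by simp
  qed
  have "(1::real,6::real) \<in> F1" by (simp add: F1_def)
  then obtain p where p: "p \<in> lattice u v" "p \<in> translate_rect (1,6) (e, -3)"
    using P unfolding piercing_def by blast
  then have p1: "e \<le> fst p" "fst p \<le> e + 1" "-3 \<le> snd p" "snd p \<le> 3"
    unfolding translate_rect_def by (auto simp: mem_Times_iff)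
  have "fst p \<le> 1"
  proof (rule ccontr)
    assume "\<not> fst p \<le> 1"
    then have "p \<in> S" using p(1) p1 e0 unfolding S_def by auto
    then have "e < fst p - 1" by (rule eS)
    then show False using p1 by linarith
  qed
  then show ?thesis using p(1) p1 e0 by (intro bexI[of _ p]) auto
qed

lemma walkup:
  fixes n :: nat
  shows "vb (lattice u v) D B \<Longrightarrow> coords B = (a,b,g,d) \<Longrightarrow> 1/5 \<le> a \<Longrightarrow> a \<le> 1 \<Longrightarrow> 1/5 \<le> g \<Longrightarrow> g \<le> 1
    \<Longrightarrow> a + g > 1 - real n / 5
    \<Longrightarrow> \<exists>B' a' b' g' d'. vb (lattice u v) D B' \<and> coords B' = (a',b',g',d') \<and> a' \<le> 1 \<and> g' \<le> 1 \<and> 1 < a' + g'"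
proof (induction n arbitrary: B a b g d)
  case 0
  then show ?case by (intro exI[of _ B] exI[of _ a] exI[of _ b] exI[of _ g] exI[of _ d]) auto
next
  case (Suc n)
  show ?case
  proof (cases "1 < a + g")
    case True then show ?thesis using Suc.prems by blast
  next
    case False
    have B1: "vb (lattice u v) D (vpar B)" using vb_par[OF Suc.prems(1)] .
    have c1: "coords (vpar B) = par (a,b,g,d)" using coords_par Suc.prems(2) by simp
    have h1: "1 - real n / 5 - 1/5 < a + g" using Suc.prems(7) by (simp add: add_divide_distrib; linarith)
    note pr = Suc.prems(3-6)
    show ?thesis
    proof (cases "d \<le> b")
      case True
      then have cc: "coords (vpar B) = (a+g, b-d, g, d)" using c1 by (simp add: par_def)
      show ?thesis by (rule Suc.IH[OF B1 cc]) (use pr h1 False in linarith)+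
    next
      case False2: False
      then have cc: "coords (vpar B) = (a, b, g+a, d-b)" using c1 by (simp add: par_def)
      show ?thesis by (rule Suc.IH[OF B1 cc]) (use pr h1 False in linarith)+
    qed
  qed
qed

lemma start_anchor:
  assumes B: "vb (lattice u v) D B" and c: "coords B = (a,b,g,d)"
    and r: "1/5 \<le> a" "a \<le> 6/5" "1/5 \<le> g" "g \<le> 6/5" "a \<le> 1 \<or> g \<le> 1"
  shows "\<exists>B' a' b' g' d'. vb (lattice u v) D B' \<and> coords B' = (a',b',g',d') \<and> a' \<le> 1 \<and> g' \<le> 1 \<and> 1 < a' + g'"
proof -
  obtain l r where Bd: "B = (l,r)" by (cases B)
  have l: "l \<in> lattice u v" and rr: "r \<in> lattice u v" and d: "\<bar>det2 l r\<bar> = D"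
    and s: "fst l \<le> 0" "0 \<le> fst r" "0 \<le> snd l" "0 \<le> snd r" using B Bd by (auto simp: vb_def)
  have e: "a = - fst l" "b = snd l" "g = fst r" "d = snd r" using c Bd by (auto simp: coords_def)
  consider "a \<le> 1" "g \<le> 1" | "1 < a" | "1 < g" using r by linarith
  then show ?thesis
  proof cases
    case 1
    show ?thesis by (rule walkup[OF B c r(1) 1(1) r(3) 1(2), of 5]) (use r in simp)
  next
    case 2
    have g1: "g \<le> 1" using 2 r by linarith
    have dd: "det2 (padd l r) r = det2 l r" by (simp add: det2_def padd_def algebra_simps)
    have "vb (lattice u v) D (padd l r, r)" using lat_add[OF l rr] rr d dd s e 2 g1
      by (simp add: vb_def padd_def)
    moreover have "coords (padd l r, r) = (a - g, b + d, g, d)" using e by (simp add: coords_def padd_def)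
    ultimately show ?thesis using 2 g1 r
      by (intro exI[of _ "(padd l r, r)"] exI[of _ "a-g"] exI[of _ "b+d"] exI[of _ g] exI[of _ d]) auto
  next
    case 3
    have a1: "a \<le> 1" using 3 r by linarith
    have dd: "det2 l (padd r l) = det2 l r" by (simp add: det2_def padd_def algebra_simps)
    have "vb (lattice u v) D (l, padd r l)" using lat_add[OF rr l] l d dd s e 3 a1
      by (simp add: vb_def padd_def)
    moreover have "coords (l, padd r l) = (a, b, g - a, d + b)" using e by (simp add: coords_def padd_def)
    ultimately show ?thesis using 3 a1 r
      by (intro exI[of _ "(l, padd r l)"] exI[of _ a] exI[of _ b] exI[of _ "g-a"] exI[of _ "d+b"]) auto
  qed
qed

lemma unimod:
  assumes p: "p \<in> lattice u v" and q: "q \<in> lattice u v" and pos: "0 < det2 p q" and lt: "det2 p q < 2 * \<bar>det2 u v\<bar>"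
  shows "\<bar>det2 p q\<bar> = \<bar>det2 u v\<bar>"
proof -
  obtain k :: int where k: "det2 p q = of_int k * det2 u v" using lat_det[OF p q] by blast
  have "\<bar>of_int k\<bar> * \<bar>det2 u v\<bar> < 2 * \<bar>det2 u v\<bar>" using k lt pos by (simp add: abs_mult)
  then have "\<bar>of_int k\<bar> < (2::real)" by (metis mult_less_cancel_right abs_ge_zero not_less zero_less_mult_iff)
  then have k2: "\<bar>k\<bar> < 2" by linarith
  have "k \<noteq> 0" using k pos by auto
  then have "\<bar>k\<bar> = 1" using k2 by linarith
  then have "\<bar>of_int k\<bar> = (1::real)" by (metis of_int_1 of_int_abs)
  then show ?thesis using k by (simp add: abs_mult)
qed

lemma lattice_bound:
  assumes D: "det2 u v \<noteq> 0" and P: "piercing F1 (lattice u v)"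
  shows "\<bar>det2 u v\<bar> \<le> 5"
proof (rule ccontr)
  assume big: "\<not> \<bar>det2 u v\<bar> \<le> 5"
  obtain z where z: "z \<in> lattice u v" "0 < fst z" "fst z \<le> 1" "\<bar>snd z\<bar> \<le> 3"
    using exists_z1[OF D P] by blast
  have box16: "(1::real,6::real) \<in> F1" by (simp add: F1_def)
  have "\<exists>B a b g d. vb (lattice u v) \<bar>det2 u v\<bar> B \<and> coords B = (a,b,g,d) \<and> 1/5 \<le> a \<and> a \<le> 6/5 \<and> 1/5 \<le> g \<and> g \<le> 6/5 \<and> (a \<le> 1 \<or> g \<le> 1)"
  proof (cases "0 \<le> snd z")
    case True
    obtain w where w: "w \<in> lattice u v" "w \<in> translate_rect (1,6) (-6/5, 1/5)"
      using P box16 unfolding piercing_def by blast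
    then have wb: "-6/5 \<le> fst w" "fst w \<le> -1/5" "1/5 \<le> snd w" "snd w \<le> 31/5"
      unfolding translate_rect_def by (auto simp: mem_Times_iff)
    have m1: "fst z * snd w \<le> 1 * (31/5)" using z wb by (intro mult_mono) auto
    have m2: "snd z * (- fst w) \<le> 3 * (6/5)" using z wb True by (intro mult_mono) auto
    have m3: "fst z * snd w \<ge> fst z * (1/5)" using z wb by (intro mult_left_mono) auto
    have m4: "snd z * (- fst w) \<ge> 0" using True wb by (intro mult_nonneg_nonneg) auto
    have phi: "det2 z w = fst z * snd w + snd z * (- fst w)" by (simp add: det2_def)
    have "\<bar>det2 z w\<bar> = \<bar>det2 u v\<bar>" using unimod[OF z(1) w(1)] phi m1 m2 m3 m4 z big by linarith
    moreover have "det2 w z = - det2 z w" by (simp add: det2_def)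
    ultimately have dw: "\<bar>det2 w z\<bar> = \<bar>det2 u v\<bar>" by simp
    have vbB: "vb (lattice u v) \<bar>det2 u v\<bar> (w, z)" using w(1) z dw wb True by (simp add: vb_def)
    have cB: "coords (w,z) = (- fst w, snd w, fst z, snd z)" by (simp add: coords_def)
    note dv = vb_detval[OF vbB cB]
    have n1: "(- fst w) * snd z \<le> (6/5) * 3" using wb z True by (intro mult_mono) auto
    have n2: "snd w * fst z \<le> (31/5) * fst z" using wb z by (intro mult_right_mono) auto
    have "fst z \<ge> 1/5" using dv(1) n1 n2 big by linarith
    then show ?thesis using vbB cB wb z
      by (intro exI[of _ "(w,z)"] exI[of _ "- fst w"] exI[of _ "snd w"] exI[of _ "fst z"] exI[of _ "snd z"]) auto
  next
    case False
    obtain w where w: "w \<in> lattice u v" "w \<in> translate_rect (1,6) (1/5, 1/5)"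
      using P box16 unfolding piercing_def by blast
    then have wb: "1/5 \<le> fst w" "fst w \<le> 6/5" "1/5 \<le> snd w" "snd w \<le> 31/5"
      unfolding translate_rect_def by (auto simp: mem_Times_iff)
    have m1: "fst z * snd w \<le> 1 * (31/5)" using z wb by (intro mult_mono) auto
    have m2: "(- snd z) * fst w \<le> 3 * (6/5)" using z wb False by (intro mult_mono) auto
    have m3: "fst z * snd w \<ge> fst z * (1/5)" using z wb by (intro mult_left_mono) auto
    have m4: "(- snd z) * fst w \<ge> 0" using False wb by (intro mult_nonneg_nonneg) auto
    have phi: "det2 z w = fst z * snd w + (- snd z) * fst w" by (simp add: det2_def)
    have "\<bar>det2 z w\<bar> = \<bar>det2 u v\<bar>" using unimod[OF z(1) w(1)] phi m1 m2 m3 m4 z big by linarith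
    then have dw: "\<bar>det2 (pneg z) w\<bar> = \<bar>det2 u v\<bar>" by (simp add: det2_def pneg_def abs_minus_commute)
    have vbB: "vb (lattice u v) \<bar>det2 u v\<bar> (pneg z, w)" using lat_neg[OF z(1)] w(1) z dw wb False
      by (simp add: vb_def pneg_def)
    have cB: "coords (pneg z, w) = (fst z, - snd z, fst w, snd w)" by (simp add: coords_def pneg_def)
    note dv = vb_detval[OF vbB cB]
    have n1: "fst z * snd w \<le> fst z * (31/5)" using wb z by (intro mult_left_mono) auto
    have n2: "(- snd z) * fst w \<le> 3 * (6/5)" using wb z False by (intro mult_mono) auto
    have "fst z \<ge> 1/5" using dv(1) n1 n2 big by linarith
    then show ?thesis using vbB cB wb z
      by (intro exI[of _ "(pneg z,w)"] exI[of _ "fst z"] exI[of _ "- snd z"] exI[of _ "fst w"] exI[of _ "snd w"]) auto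
  qed
  then obtain B a b g d where B: "vb (lattice u v) \<bar>det2 u v\<bar> B" "coords B = (a,b,g,d)"
    "1/5 \<le> a" "a \<le> 6/5" "1/5 \<le> g" "g \<le> 6/5" "a \<le> 1 \<or> g \<le> 1" by blast
  obtain B' a' b' g' d' where B': "vb (lattice u v) \<bar>det2 u v\<bar> B'" "coords B' = (a',b',g',d')"
    "a' \<le> 1" "g' \<le> 1" "1 < a' + g'" using start_anchor[OF B] by blast
  have "\<bar>det2 u v\<bar> \<le> 5" using anchor_bound[OF D P B'] .
  then show False using big by simp
qed

definition fv :: "int \<Rightarrow> int" where
  "fv k = (if k = 0 then 0 else if k = 1 then 2 else if k = 2 then 4 else if k = 3 then 1 else if k = 4 then 5 else 3)"

lemma int6_cases: fixes r :: int assumes "0 \<le> r" "r < 6" shows "r = 0 \<or> r = 1 \<or> r = 2 \<or> r = 3 \<or> r = 4 \<or> r = 5"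
  using assms by linarith

lemma comb_1_6:
  fixes r s :: int
  assumes r: "0 \<le> r" "r < 6" and s: "0 \<le> s" "s < 6"
  shows "\<exists>k<1::nat. \<exists>m<6::nat. (s + int m) mod 6 = fv ((r + int k) mod 6)"
  using int6_cases[OF r] int6_cases[OF s]
  by (elim disjE) (simp_all add: fv_def Ex_less_Suc numeral_eq_Suc)

lemma comb_2_4:
  fixes r s :: int
  assumes r: "0 \<le> r" "r < 6" and s: "0 \<le> s" "s < 6"
  shows "\<exists>k<2::nat. \<exists>m<4::nat. (s + int m) mod 6 = fv ((r + int k) mod 6)"
  using int6_cases[OF r] int6_cases[OF s]
  by (elim disjE) (simp_all add: fv_def Ex_less_Suc numeral_eq_Suc)

lemma comb_3_3:
  fixes r s :: int
  assumes r: "0 \<le> r" "r < 6" and s: "0 \<le> s" "s < 6"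
  shows "\<exists>k<3::nat. \<exists>m<3::nat. (s + int m) mod 6 = fv ((r + int k) mod 6)"
  using int6_cases[OF r] int6_cases[OF s]
  by (elim disjE) (simp_all add: fv_def Ex_less_Suc numeral_eq_Suc)

lemma comb_4_2:
  fixes r s :: int
  assumes r: "0 \<le> r" "r < 6" and s: "0 \<le> s" "s < 6"
  shows "\<exists>k<4::nat. \<exists>m<2::nat. (s + int m) mod 6 = fv ((r + int k) mod 6)"
  using int6_cases[OF r] int6_cases[OF s]
  by (elim disjE) (simp_all add: fv_def Ex_less_Suc numeral_eq_Suc)

lemma comb_6_1:
  fixes r s :: int
  assumes r: "0 \<le> r" "r < 6" and s: "0 \<le> s" "s < 6"
  shows "\<exists>k<6::nat. \<exists>m<1::nat. (s + int m) mod 6 = fv ((r + int k) mod 6)"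
  using int6_cases[OF r] int6_cases[OF s]
  by (elim disjE) (simp_all add: fv_def Ex_less_Suc numeral_eq_Suc)

lemma comb:
  fixes r s :: int
  assumes r: "0 \<le> r" "r < 6" and s: "0 \<le> s" "s < 6"
    and ab: "(a,b) \<in> {(1::nat,6::nat),(2,4),(3,3),(4,2),(6,1)}"
  shows "\<exists>k<a. \<exists>m<b. (s + int m) mod 6 = fv ((r + int k) mod 6)"
proof -
  have "(a,b) = (1,6) \<or> (a,b) = (2,4) \<or> (a,b) = (3,3) \<or> (a,b) = (4,2) \<or> (a,b) = (6,1)" using ab by simp
  then show ?thesis
  proof (elim disjE)
    assume "(a,b) = (1,6)" then show ?thesis using comb_1_6[OF r s] by simp
  next
    assume "(a,b) = (2,4)" then show ?thesis using comb_2_4[OF r s] by simp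
  next
    assume "(a,b) = (3,3)" then show ?thesis using comb_3_3[OF r s] by simp
  next
    assume "(a,b) = (4,2)" then show ?thesis using comb_4_2[OF r s] by simp
  next
    assume "(a,b) = (6,1)" then show ?thesis using comb_6_1[OF r s] by simp
  qed
qed

lemma lim16: "((\<lambda>r::real. (2*r+1)*(r/3+5)/(2*r)^2) \<longlongrightarrow> 1/6) at_top"
proof -
  have i: "((\<lambda>r::real. inverse r) \<longlongrightarrow> 0) at_top" by (rule tendsto_inverse_0_at_top[OF filterlim_ident])
  have "((\<lambda>r::real. 1/6 + 31/12 * inverse r + 5/4 * (inverse r * inverse r)) \<longlongrightarrow> 1/6 + 31/12*0 + 5/4*(0*0)) at_top"
    by (intro tendsto_intros i)
  then have l: "((\<lambda>r::real. 1/6 + 31/12 * inverse r + 5/4 * (inverse r * inverse r)) \<longlongrightarrow> 1/6) at_top" by simp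
  have ev: "eventually (\<lambda>r::real. 1/6 + 31/12 * inverse r + 5/4 * (inverse r * inverse r) = (2*r+1)*(r/3+5)/(2*r)^2) at_top"
    using eventually_gt_at_top[of "0::real"] by eventually_elim (simp add: field_simps power2_eq_square)
  show ?thesis using l tendsto_cong[OF ev] by simp
qed

definition Pset :: "(real \<times> real) set" where
  "Pset = {(of_int i, of_int j) | i j. j mod 6 = fv (i mod 6)}"

lemma F1_cases: assumes "R \<in> F1"
  shows "\<exists>a b::nat. (a,b) \<in> {(1::nat,6::nat),(2,4),(3,3),(4,2),(6,1)} \<and> R = (real a, real b)"
proof -
  from assms have "R = (1,6) \<or> R = (2,4) \<or> R = (3,3) \<or> R = (4,2) \<or> R = (6,1)" by (simp add: F1_def)
  then show ?thesis
  proof (elim disjE)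
    assume "R = (1,6)" then show ?thesis by (intro exI[of _ "1::nat"] exI[of _ "6::nat"]) simp
  next
    assume "R = (2,4)" then show ?thesis by (intro exI[of _ "2::nat"] exI[of _ "4::nat"]) simp
  next
    assume "R = (3,3)" then show ?thesis by (intro exI[of _ "3::nat"] exI[of _ "3::nat"]) simp
  next
    assume "R = (4,2)" then show ?thesis by (intro exI[of _ "4::nat"] exI[of _ "2::nat"]) simp
  next
    assume "R = (6,1)" then show ?thesis by (intro exI[of _ "6::nat"] exI[of _ "1::nat"]) simp
  qed
qed

lemma P_pierce: "piercing F1 Pset"
  unfolding piercing_def
proof (intro ballI allI)
  fix R and t :: "real \<times> real" assume R: "R \<in> F1"
  obtain a b :: nat where ab: "(a,b) \<in> {(1::nat,6::nat),(2,4),(3,3),(4,2),(6,1)}" and Rd: "R = (real a, real b)"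
    using F1_cases[OF R] by blast
  define i0 where "i0 = \<lceil>fst t\<rceil>"
  define j0 where "j0 = \<lceil>snd t\<rceil>"
  have r: "0 \<le> i0 mod 6" "i0 mod 6 < 6" by simp_all
  have s: "0 \<le> j0 mod 6" "j0 mod 6 < 6" by simp_all
  obtain k m where k: "k < a" and m: "m < b" and km: "(j0 mod 6 + int m) mod 6 = fv ((i0 mod 6 + int k) mod 6)"
    using comb[OF r s ab] by blast
  define i where "i = i0 + int k"
  define j where "j = j0 + int m"
  have "j mod 6 = fv (i mod 6)" using km unfolding i_def j_def by (simp add: mod_add_left_eq)
  then have inP: "(of_int i, of_int j) \<in> Pset" unfolding Pset_def by blast
  have x1: "fst t \<le> of_int i" unfolding i_def i0_def using le_of_int_ceiling[of "fst t"] of_nat_0_le_iff[of k] by (simp only: of_int_add of_int_of_nat_eq; linarith)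
  have x2: "of_int i \<le> fst t + real a"
  proof -
    have "of_int i0 < fst t + 1" unfolding i0_def using ceiling_correct[of "fst t"] by linarith
    moreover have "int k + 1 \<le> int a" using k by simp
    ultimately show ?thesis unfolding i_def by simp
  qed
  have y1: "snd t \<le> of_int j" unfolding j_def j0_def using le_of_int_ceiling[of "snd t"] of_nat_0_le_iff[of m] by (simp only: of_int_add of_int_of_nat_eq; linarith)
  have y2: "of_int j \<le> snd t + real b"
  proof -
    have "of_int j0 < snd t + 1" unfolding j0_def using ceiling_correct[of "snd t"] by linarith
    moreover have "int m + 1 \<le> int b" using m by simp
    ultimately show ?thesis unfolding j_def by simp
  qed
  show "\<exists>p\<in>Pset. p \<in> translate_rect R t"
    using inP x1 x2 y1 y2 unfolding Rd translate_rect_def by (intro bexI[of _ "(of_int i, of_int j)"]) auto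
qed

lemma fv_range: "0 \<le> fv k \<and> fv k \<le> 5" by (simp add: fv_def)

lemma card_bound:
  fixes r :: real
  assumes r1: "1 \<le> r"
  defines "S \<equiv> Pset \<inter> ({-r..r} \<times> {-r..r})"
  shows "finite S \<and> real (card S) \<le> (2*r+1)*(r/3+5)"
proof -
  define N where "N = \<lfloor>r\<rfloor>"
  define Q where "Q = \<lceil>r/6\<rceil> + 1"
  define g where "g = (\<lambda>(i::int,q::int). (of_int i :: real, of_int (6*q + fv (i mod 6)) :: real))"
  define A where "A = {-N..N} \<times> {-Q..Q}"
  have sub: "S \<subseteq> g ` A"
  proof
    fix p assume p: "p \<in> S"
    then obtain i j :: int where pe: "p = (of_int i, of_int j)" and ij: "j mod 6 = fv (i mod 6)"
      unfolding S_def Pset_def by blast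
    have bx: "-r \<le> of_int i" "of_int i \<le> r" "-r \<le> of_int j" "of_int j \<le> r"
      using p pe unfolding S_def by auto
    have i1: "i \<le> N" unfolding N_def using bx by (simp add: le_floor_iff)
    have i2: "-i \<le> N" unfolding N_def using bx by (simp add: le_floor_iff)
    define q where "q = j div 6"
    have jq: "j = 6*q + fv (i mod 6)" unfolding q_def using ij div_mult_mod_eq[of j 6] by linarith
    have fr: "0 \<le> fv (i mod 6)" "fv (i mod 6) \<le> 5" using fv_range by auto
    have jq': "of_int j = 6 * of_int q + (of_int (fv (i mod 6)) :: real)" using jq by simp
    have fr': "0 \<le> (of_int (fv (i mod 6)) :: real)" "(of_int (fv (i mod 6)) :: real) \<le> 5" using fr by simp_all
    have cq: "r/6 \<le> of_int \<lceil>r/6\<rceil>" by (rule le_of_int_ceiling)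
    have q1: "of_int q \<le> (of_int \<lceil>r/6\<rceil> :: real)" using jq' fr' bx cq by linarith
    have q2: "- of_int q \<le> (of_int \<lceil>r/6\<rceil> + 1 :: real)" using jq' fr' bx cq by linarith
    have "q \<le> Q" using q1 unfolding Q_def by linarith
    moreover have "-Q \<le> q" using q2 unfolding Q_def by linarith
    ultimately have "(i,q) \<in> A" unfolding A_def using i1 i2 by auto
    moreover have "p = g (i,q)" unfolding g_def pe using jq by simp
    ultimately show "p \<in> g ` A" by blast
  qed
  have fA: "finite A" unfolding A_def by simp
  have fS: "finite S" using finite_subset[OF sub] fA by simp
  have "card S \<le> card (g ` A)" using card_mono[OF _ sub] fA by simp
  also have "\<dots> \<le> card A" using card_image_le[OF fA] .
  also have "\<dots> = nat (2*N+1) * nat (2*Q+1)" unfolding A_def by (simp add: card_cartesian_product)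
  finally have c1: "real (card S) \<le> real (nat (2*N+1)) * real (nat (2*Q+1))"
    by (metis of_nat_le_iff of_nat_mult)
  have N0: "0 \<le> N" unfolding N_def using r1 by simp
  have Q0: "0 \<le> Q" unfolding Q_def using r1 by (simp add: add_increasing)
  have e1: "real (nat (2*N+1)) = 2 * of_int N + 1" using N0 by simp
  have e2: "real (nat (2*Q+1)) = 2 * of_int Q + 1" using Q0 by simp
  have b1: "2 * of_int N + 1 \<le> 2*r+1" unfolding N_def using of_int_floor_le[of r] by linarith
  have b2: "2 * of_int Q + 1 \<le> r/3+5" unfolding Q_def using of_int_ceiling_le_add_one[of "r/6"] by (simp; linarith)
  have "real (nat (2*N+1)) * real (nat (2*Q+1)) \<le> (2*r+1)*(r/3+5)"
    unfolding e1 e2 using b1 b2 N0 Q0 by (intro mult_mono) auto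
  then show ?thesis using c1 fS by linarith
qed

lemma P_density: "density Pset \<le> ereal (1/6)"
proof -
  define h where "h = (\<lambda>r::real. (2*r+1)*(r/3+5)/(2*r)^2)"
  have ev: "eventually (\<lambda>r. ecount (Pset \<inter> ({-r..r} \<times> {-r..r})) * ereal (1 / (2 * r)^2) \<le> ereal (h r)) at_top"
    using eventually_ge_at_top[of "1::real"]
  proof eventually_elim
    case (elim r)
    define S where "S = Pset \<inter> ({-r..r} \<times> {-r..r})"
    have cb: "finite S" "real (card S) \<le> (2*r+1)*(r/3+5)" using card_bound[OF elim] unfolding S_def by auto
    have pos: "0 < (2*r)^2" using elim by simp
    have "ecount S * ereal (1 / (2 * r)^2) = ereal (real (card S) / (2*r)^2)"
      using cb(1) by (simp add: ecount_def)
    also have "\<dots> \<le> ereal (h r)" unfolding h_def using cb(2) pos by (simp add: divide_right_mono)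
    finally show ?case unfolding S_def .
  qed
  have "density Pset \<le> Limsup at_top (\<lambda>r. ereal (h r))"
    unfolding density_def by (rule Limsup_mono[OF ev])
  also have "Limsup at_top (\<lambda>r. ereal (h r)) = ereal (1/6)"
  proof -
    have lh: "(h \<longlongrightarrow> 1/6) at_top" unfolding h_def by (rule lim16)
    have "((\<lambda>r. ereal (h r)) \<longlongrightarrow> ereal (1/6)) at_top" by (rule tendsto_ereal[OF lh])
    then show ?thesis by (intro lim_imp_Limsup) simp_all
  qed
  finally show ?thesis .
qed

theorem theorem6:
  shows "\<exists>F. finite F \<and> card F = 5 \<and> (\<forall>R\<in>F. is_rect R) \<and>
           pi_L F \<ge> ereal (6/5) * pi_dens F"
proof (intro exI[of _ F1] conjI)
  show "finite F1" by (simp add: F1_def)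
  show "card F1 = 5" by (simp add: F1_def)
  show "\<forall>R\<in>F1. is_rect R" by (simp add: F1_def is_rect_def)
  have L: "ereal (1/5) \<le> pi_L F1" unfolding pi_L_def
  proof (rule Inf_greatest)
    fix x assume "x \<in> {ereal (1 / \<bar>det2 u v\<bar>) | u v. det2 u v \<noteq> 0 \<and> piercing F1 (lattice u v)}"
    then obtain u v where x: "x = ereal (1 / \<bar>det2 u v\<bar>)" "det2 u v \<noteq> 0" "piercing F1 (lattice u v)"
      by blast
    have d5: "\<bar>det2 u v\<bar> \<le> 5" by (rule lattice_bound[OF x(2) x(3)])
    have d0: "\<bar>det2 u v\<bar> > 0" using x(2) by simp
    have "1/5 \<le> 1 / \<bar>det2 u v\<bar>" using d5 d0 by (simp add: divide_left_mono)
    then show "ereal (1/5) \<le> x" using x(1) by simp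
  qed
  have Pd: "pi_dens F1 \<le> ereal (1/6)"
  proof -
    have "pi_dens F1 \<le> density Pset" unfolding pi_dens_def
      by (rule Inf_lower) (use P_pierce in blast)
    then show ?thesis using P_density by (rule order_trans)
  qed
  have "ereal (6/5) * pi_dens F1 \<le> ereal (6/5) * ereal (1/6)" by (rule ereal_mult_left_mono[OF Pd]) simp
  also have "\<dots> = ereal (1/5)" by simp
  finally show "pi_L F1 \<ge> ereal (6/5) * pi_dens F1" using L by simp
qed

end
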